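(* Let $p\ge1$, let $A_1,\dots,A_p\ge1$ and $n_1,\dots,n_p\ge0$ be integers, and let $P(X_1,\dots,X_p)\in\mathbb{Q}[X_1,\dots,X_p]$. Let $z_1,\dots,z_p$ be complex numbers with $|z_j|>1$ for all $j=1,\dots,p$. Then the series $$S=\sum_{k_1\ge\cdots\ge k_p\ge1}\frac{P(k_1,\dots,k_p)}{(k_1)_{n_1+1}^{A_1}\cdots(k_p)_{n_p+1}^{A_p}}\,z_1^{-k_1}\cdots z_p^{-k_p}$$ can be written as a finite linear combination of multiple polylogarithms $\mathrm{La}_{s_1,\dots,s_q}(1/\widehat z_1,\dots,1/\widehat z_q)$, where $0\le q\le p$, $s_i\ge1$ for $i=1,\dots,q$, $\sum_{j=1}^qs_j\le\sum_{j=1}^pA_j$, and each $\widehat z_i$ is a product of some of $z_1,\dots,z_p$; the coefficients of this combination are polynomials with rational coefficients in the quantities $(1-z_{j_1}\cdots z_{j_m})^{-1}$ ($m\ge1$, $1\le j_1<\cdots<j_m\le p$) and $z_j^{\pm1}$ ($1\le j\le p$).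
   Context: $(\alpha)_m=\alpha(\alpha+1)\cdots(\alpha+m-1)$ is the Pochhammer symbol. For $q\ge1$, integers $s_1,\dots,s_q$ and complex $w_1,\dots,w_q$ with $|w_i|<1$, $\mathrm{La}_{s_1,\dots,s_q}(w_1,\dots,w_q)=\sum_{k_1\ge k_2\ge\cdots\ge k_q\ge1}\frac{w_1^{k_1}\cdots w_q^{k_q}}{k_1^{s_1}\cdots k_q^{s_q}}$. The polylogarithm of depth $q=0$ is the constant $1$. *)

theory Defs
  imports "HOL-Analysis.Analysis"
begin

text \<open>Index tuples are functions nat \<Rightarrow> nat; position j (0-based) stands for index j+1
  of the paper.\<close>
definition chain_idx :: "nat \<Rightarrow> (nat \<Rightarrow> nat) set" where
  "chain_idx q = {k. (\<forall>i. Suc i < q \<longrightarrow> k (Suc i) \<le> k i) \<and> (\<forall>i<q. 1 \<le> k i) \<and> (\<forall>i\<ge>q. k i = 0)}"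

definition La :: "nat \<Rightarrow> (nat \<Rightarrow> int) \<Rightarrow> (nat \<Rightarrow> complex) \<Rightarrow> complex" where
  "La q s w = (\<Sum>\<^sub>\<infinity>k\<in>chain_idx q. \<Prod>i<q. w i ^ k i / (of_nat (k i)) powi (s i))"

text \<open>Evaluation of the polynomial with rational coefficient function c (finite support)
  in the p variables X_1..X_p at the point x: sum over exponent vectors e of
  c e * prod_{j<p} x_j^{e_j}.\<close>
definition poly_eval :: "nat \<Rightarrow> ((nat \<Rightarrow> nat) \<Rightarrow> rat) \<Rightarrow> (nat \<Rightarrow> complex) \<Rightarrow> complex" where
  "poly_eval p c x = (\<Sum>e\<in>{e. c e \<noteq> 0}. of_rat (c e) * (\<Prod>j<p. x j ^ e j))"

inductive_set coeff_alg :: "nat \<Rightarrow> (nat \<Rightarrow> complex) \<Rightarrow> complex set" for p z where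
  rat: "of_rat r \<in> coeff_alg p z"
| var: "j < p \<Longrightarrow> z j \<in> coeff_alg p z"
| inv_var: "j < p \<Longrightarrow> inverse (z j) \<in> coeff_alg p z"
| inv_one_minus: "J \<subseteq> {..<p} \<Longrightarrow> J \<noteq> {} \<Longrightarrow> inverse (1 - (\<Prod>j\<in>J. z j)) \<in> coeff_alg p z"
| add: "a \<in> coeff_alg p z \<Longrightarrow> b \<in> coeff_alg p z \<Longrightarrow> a + b \<in> coeff_alg p z"
| mult: "a \<in> coeff_alg p z \<Longrightarrow> b \<in> coeff_alg p z \<Longrightarrow> a * b \<in> coeff_alg p z"

end

theory Submission
  imports Defs "HOL-Real_Asymp.Real_Asymp"
begin
section \<open>The coefficient algebra\<close>

lemma R_neg: "a \<in> coeff_alg p z \<Longrightarrow> - a \<in> coeff_alg p z"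
proof -
  assume "a \<in> coeff_alg p z"
  from coeff_alg.mult[OF coeff_alg.rat[of "-1"] this] show ?thesis by simp
qed

lemma R_diff: "a \<in> coeff_alg p z \<Longrightarrow> b \<in> coeff_alg p z \<Longrightarrow> a - b \<in> coeff_alg p z"
  using coeff_alg.add[OF _ R_neg, of a p z b] by simp

lemma R_of_nat: "(of_nat n :: complex) \<in> coeff_alg p z"
  using coeff_alg.rat[of "of_nat n"] by simp

lemma R_of_int: "(of_int n :: complex) \<in> coeff_alg p z"
  using coeff_alg.rat[of "of_int n"] by simp

lemma R_0: "0 \<in> coeff_alg p z" using coeff_alg.rat[of 0] by simp
lemma R_1: "1 \<in> coeff_alg p z" using coeff_alg.rat[of 1] by simp

lemma R_pow: "a \<in> coeff_alg p z \<Longrightarrow> a ^ n \<in> coeff_alg p z"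
  by (induction n) (auto intro: R_1 coeff_alg.mult)

lemma R_sum: "(\<And>i. i \<in> I \<Longrightarrow> f i \<in> coeff_alg p z) \<Longrightarrow> sum f I \<in> coeff_alg p z"
  by (induction I rule: infinite_finite_induct) (auto intro: R_0 coeff_alg.add)

lemma R_prod: "(\<And>i. i \<in> I \<Longrightarrow> f i \<in> coeff_alg p z) \<Longrightarrow> prod f I \<in> coeff_alg p z"
  by (induction I rule: infinite_finite_induct) (auto intro: R_1 coeff_alg.mult)

definition uJ :: "(nat \<Rightarrow> complex) \<Rightarrow> nat set \<Rightarrow> complex" where
  "uJ z J = 1 / (\<Prod>j\<in>J. z j)"

lemma prodz_R: "J \<subseteq> {..<p} \<Longrightarrow> (\<Prod>j\<in>J. z j) \<in> coeff_alg p z"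
  by (rule R_prod) (auto intro: coeff_alg.var)

lemma uJ_R: "J \<subseteq> {..<p} \<Longrightarrow> uJ z J \<in> coeff_alg p z"
proof -
  assume J: "J \<subseteq> {..<p}"
  have "uJ z J = (\<Prod>j\<in>J. inverse (z j))"
    unfolding uJ_def by (simp add: prod_inversef[symmetric] divide_inverse)
  also have "\<dots> \<in> coeff_alg p z" using J by (intro R_prod) (auto intro: coeff_alg.inv_var)
  finally show ?thesis .
qed

lemma uJ_inv_R: "J \<subseteq> {..<p} \<Longrightarrow> inverse (uJ z J) \<in> coeff_alg p z"
  unfolding uJ_def using prodz_R by simp

lemma uJ_one_minus_R:
  assumes "J \<subseteq> {..<p}" "J \<noteq> {}" "(\<Prod>j\<in>J. z j) \<noteq> 0"
  shows "inverse (1 - uJ z J) \<in> coeff_alg p z"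
proof -
  define P where "P = (\<Prod>j\<in>J. z j)"
  have "inverse (1 - uJ z J) = - P * inverse (1 - P)"
  proof (cases "P = 1")
    case True then show ?thesis unfolding uJ_def P_def[symmetric] by auto
  next
    case False then show ?thesis using assms(3) unfolding uJ_def P_def[symmetric]
      by (simp add: field_simps)
  qed
  also have "\<dots> \<in> coeff_alg p z"
    using assms unfolding P_def
    by (intro coeff_alg.mult R_neg prodz_R coeff_alg.inv_one_minus) auto
  finally show ?thesis .
qed

lemma norm_prod_gt1:
  assumes "finite J" "J \<noteq> {}" "\<forall>j\<in>J. norm (z j) > (1::real)"
  shows "norm (\<Prod>j\<in>J. z j :: complex) > 1"
  using assms
proof (induction J rule: finite_ne_induct)
  case (singleton x) then show ?case by simp
next
  case (insert x F)
  have "norm (\<Prod>j\<in>insert x F. z j) = norm (z x) * norm (\<Prod>j\<in>F. z j)"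
    using insert by (simp add: norm_mult)
  also have "\<dots> > 1" using insert
    by (metis insert_iff less_1_mult)
  finally show ?case .
qed

lemma uJ_norm:
  assumes "J \<subseteq> {..<p}" "J \<noteq> {}" "\<forall>j<p. norm (z j) > 1"
  shows "norm (uJ z J) < 1" "uJ z J \<noteq> 0"
proof -
  have "norm (\<Prod>j\<in>J. z j) > 1" using assms finite_subset[OF assms(1)]
    by (intro norm_prod_gt1) auto
  then show "norm (uJ z J) < 1" "uJ z J \<noteq> 0" unfolding uJ_def
    by (auto simp: norm_divide divide_less_eq)
qed

section \<open>Function classes\<close>

definition fr :: "nat \<Rightarrow> nat \<Rightarrow> nat \<Rightarrow> complex" where
  "fr i a = (\<lambda>K. 1 / (of_nat K + of_nat i) ^ a)"

inductive_set Gs :: "nat \<Rightarrow> (nat \<Rightarrow> complex) \<Rightarrow> (nat \<times> nat) set \<Rightarrow> (nat \<Rightarrow> complex) set"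
  for p z S where
  Gzero: "(\<lambda>_. 0) \<in> Gs p z S"
| Gpoly: "(\<lambda>K. of_nat K ^ e) \<in> Gs p z S"
| Gfrac: "(i,a) \<in> S \<Longrightarrow> fr i a \<in> Gs p z S"
| Gadd: "f \<in> Gs p z S \<Longrightarrow> g \<in> Gs p z S \<Longrightarrow> (\<lambda>K. f K + g K) \<in> Gs p z S"
| Gsmult: "r \<in> coeff_alg p z \<Longrightarrow> f \<in> Gs p z S \<Longrightarrow> (\<lambda>K. r * f K) \<in> Gs p z S"
| Gcong: "f \<in> Gs p z S \<Longrightarrow> (\<forall>K\<ge>1. g K = f K) \<Longrightarrow> g \<in> Gs p z S"

abbreviation G :: "nat \<Rightarrow> (nat \<Rightarrow> complex) \<Rightarrow> nat \<Rightarrow> (nat \<Rightarrow> complex) set" where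
  "G p z w \<equiv> Gs p z {(i,a). a \<le> w}"

lemma Gs_mono: "f \<in> Gs p z S \<Longrightarrow> S \<subseteq> S' \<Longrightarrow> f \<in> Gs p z S'"
  by (induction rule: Gs.induct) (auto intro: Gs.intros)

lemma G_mono: "f \<in> G p z w \<Longrightarrow> w \<le> w' \<Longrightarrow> f \<in> G p z w'"
  by (erule Gs_mono) auto

lemma Gs_neg: assumes "f \<in> Gs p z S" shows "(\<lambda>K. - f K) \<in> Gs p z S"
proof -
  have "(\<lambda>K. (-1) * f K) \<in> Gs p z S" by (rule Gsmult[OF R_neg[OF R_1] assms])
  then show ?thesis by simp
qed

lemma Gs_diff: assumes "f \<in> Gs p z S" "g \<in> Gs p z S" shows "(\<lambda>K. f K - g K) \<in> Gs p z S"
proof -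
  have "(\<lambda>K. f K + - g K) \<in> Gs p z S" by (rule Gadd[OF assms(1) Gs_neg[OF assms(2)]])
  then show ?thesis by simp
qed

lemma Gs_const: assumes "r \<in> coeff_alg p z" shows "(\<lambda>_. r) \<in> Gs p z S"
proof -
  have "(\<lambda>K. r * of_nat K ^ 0) \<in> Gs p z S" by (rule Gsmult[OF assms Gpoly])
  then show ?thesis by simp
qed

lemma Gs_sum: "(\<And>i. i \<in> I \<Longrightarrow> f i \<in> Gs p z S) \<Longrightarrow> (\<lambda>K. \<Sum>i\<in>I. f i K) \<in> Gs p z S"
  by (induction I rule: infinite_finite_induct) (auto intro: Gs.intros)

lemma Gs_R: "f \<in> Gs p z S \<Longrightarrow> K \<ge> 1 \<Longrightarrow> f K \<in> coeff_alg p z"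
proof (induction arbitrary: K rule: Gs.induct)
  case (Gfrac i a)
  have "fr i a K = of_rat (1 / (of_nat K + of_nat i) ^ a)"
    by (simp add: fr_def of_rat_divide of_rat_power of_rat_add)
  then show ?case by (simp add: coeff_alg.rat)
qed (auto intro: R_0 R_pow R_of_nat coeff_alg.add coeff_alg.mult)

lemma Gs_growth: "f \<in> Gs p z S \<Longrightarrow> \<exists>C E. \<forall>K\<ge>1. norm (f K) \<le> C * real K ^ E"
proof (induction rule: Gs.induct)
  case Gzero then show ?case by (intro exI[of _ 0]) auto
next
  case (Gpoly e) then show ?case by (intro exI[of _ 1] exI[of _ e]) (auto simp: norm_power)
next
  case (Gfrac i a)
  have "norm (fr i a K) \<le> 1 * real K ^ 0" if "K \<ge> 1" for K
  proof -
    have "norm (of_nat K + of_nat i :: complex) = real K + real i"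
      by (metis norm_of_nat of_nat_add)
    then have "norm (of_nat K + of_nat i :: complex) \<ge> 1" using that by simp
    then have "norm ((of_nat K + of_nat i :: complex) ^ a) \<ge> 1"
      by (simp add: norm_power one_le_power)
    moreover have "norm (fr i a K) = 1 / norm ((of_nat K + of_nat i :: complex) ^ a)"
      by (simp add: fr_def norm_divide)
    ultimately show ?thesis by (simp add: divide_le_eq)
  qed
  then show ?case by blast
next
  case (Gadd f g)
  then obtain C1 E1 C2 E2 where 1: "\<forall>K\<ge>1. norm (f K) \<le> C1 * real K ^ E1"
    and 2: "\<forall>K\<ge>1. norm (g K) \<le> C2 * real K ^ E2" by blast
  have "norm (f K + g K) \<le> (\<bar>C1\<bar> + \<bar>C2\<bar>) * real K ^ (E1 + E2)" if K: "K \<ge> 1" for K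
  proof -
    have a: "real K ^ E1 \<le> real K ^ (E1 + E2)" "real K ^ E2 \<le> real K ^ (E1 + E2)"
      using K by (auto intro!: power_increasing)
    have b1: "C1 * real K ^ E1 \<le> \<bar>C1\<bar> * real K ^ (E1 + E2)"
    proof -
      have "C1 * real K ^ E1 \<le> \<bar>C1\<bar> * real K ^ E1" by (simp add: mult_right_mono)
      also have "\<dots> \<le> \<bar>C1\<bar> * real K ^ (E1 + E2)" using a(1) by (simp add: mult_left_mono)
      finally show ?thesis .
    qed
    have b2: "C2 * real K ^ E2 \<le> \<bar>C2\<bar> * real K ^ (E1 + E2)"
    proof -
      have "C2 * real K ^ E2 \<le> \<bar>C2\<bar> * real K ^ E2" by (simp add: mult_right_mono)
      also have "\<dots> \<le> \<bar>C2\<bar> * real K ^ (E1 + E2)" using a(2) by (simp add: mult_left_mono)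
      finally show ?thesis .
    qed
    have "norm (f K + g K) \<le> norm (f K) + norm (g K)" by (rule norm_triangle_ineq)
    also have "\<dots> \<le> C1 * real K ^ E1 + C2 * real K ^ E2" using 1 2 K by (intro add_mono) auto
    also have "\<dots> \<le> \<bar>C1\<bar> * real K ^ (E1 + E2) + \<bar>C2\<bar> * real K ^ (E1 + E2)"
      using b1 b2 by (rule add_mono)
    finally show ?thesis by (simp add: algebra_simps)
  qed
  then show ?case by blast
next
  case (Gsmult r f)
  then obtain C E where 1: "\<forall>K\<ge>1. norm (f K) \<le> C * real K ^ E" by blast
  have "norm (r * f K) \<le> (norm r * C) * real K ^ E" if "K \<ge> 1" for K
    using 1 that by (simp add: norm_mult mult.assoc mult_left_mono)
  then show ?case by blast
next
  case (Gcong f g)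
  then obtain C E where "\<forall>K\<ge>1. norm (f K) \<le> C * real K ^ E" by blast
  with Gcong.hyps(2) show ?case by (intro exI[of _ C] exI[of _ E]) auto
qed

lemma poly_frac:
  assumes "\<forall>a'\<le>a. (i,a') \<in> S"
  shows "(\<lambda>K. of_nat K ^ e * fr i a K) \<in> Gs p z S"
  using assms
proof (induction e arbitrary: a)
  case 0
  have "fr i a \<in> Gs p z S" using 0 by (intro Gfrac) auto
  then show ?case by simp
next
  case (Suc e)
  show ?case
  proof (cases a)
    case 0
    have "(\<lambda>K. of_nat K ^ Suc e) \<in> Gs p z S" by (rule Gpoly)
    then show ?thesis using 0 by (simp add: fr_def)
  next
    case (Suc a')
    have h1: "(\<lambda>K. of_nat K ^ e * fr i a' K) \<in> Gs p z S" using Suc.prems Suc by (intro Suc.IH) auto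
    have h2: "(\<lambda>K. of_nat K ^ e * fr i a K) \<in> Gs p z S" using Suc.prems by (intro Suc.IH) auto
    have h3: "(\<lambda>K. of_nat K ^ e * fr i a' K - of_nat i * (of_nat K ^ e * fr i a K)) \<in> Gs p z S"
      by (intro Gs_diff h1 Gsmult[OF R_of_nat] h2)
    show ?thesis
    proof (rule Gcong[OF h3], intro allI impI)
      fix K :: nat assume K: "K \<ge> 1"
      have nz: "(of_nat K + of_nat i :: complex) \<noteq> 0"
        by (metis K add_is_0 not_one_le_zero of_nat_add of_nat_eq_0_iff)
      show "of_nat K ^ Suc e * fr i a K = of_nat K ^ e * fr i a' K - of_nat i * (of_nat K ^ e * fr i a K)"
      proof -
        define x where "x = (of_nat K + of_nat i :: complex)"
        have k: "of_nat K = x - of_nat i" unfolding x_def by simp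
        have nzp: "x ^ a' \<noteq> 0" "x \<noteq> 0" using nz unfolding x_def by auto
        show ?thesis unfolding fr_def Suc x_def[symmetric] k using nzp
          by (simp add: field_simps)
      qed
    qed
  qed
qed

lemma frac_frac_same: "fr i a K * fr i b K = fr i (a + b) K"
  by (simp add: fr_def power_add)

lemma frac_frac_diff:
  assumes "i \<noteq> j" "\<forall>a'\<le>a. (i,a') \<in> S" "\<forall>b'\<le>b. (j,b') \<in> S"
  shows "(\<lambda>K. fr i a K * fr j b K) \<in> Gs p z S"
  using assms(2,3)
proof (induction "a + b" arbitrary: a b rule: less_induct)
  case less
  show ?case
  proof (cases "a = 0 \<or> b = 0")
    case True
    then show ?thesis
    proof
      assume "a = 0"
      then show ?thesis using Gfrac[of j b S p z] less.prems by (simp add: fr_def)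
    next
      assume "b = 0"
      then show ?thesis using Gfrac[of i a S p z] less.prems by (simp add: fr_def)
    qed
  next
    case False
    then obtain a' b' where a: "a = Suc a'" and b: "b = Suc b'" by (meson not0_implies_Suc)
    have h1: "(\<lambda>K. fr i a K * fr j b' K) \<in> Gs p z S" using less.prems b by (intro less.hyps) auto
    have h2: "(\<lambda>K. fr i a' K * fr j b K) \<in> Gs p z S" using less.prems a by (intro less.hyps) auto
    define c :: complex where "c = 1 / (of_int (int j) - of_int (int i))"
    have cR: "c \<in> coeff_alg p z" unfolding c_def
      using coeff_alg.rat[of "1 / (of_int (int j) - of_int (int i))" p z]
      by (simp add: of_rat_divide of_rat_diff)
    have h3: "(\<lambda>K. c * (fr i a K * fr j b' K - fr i a' K * fr j b K)) \<in> Gs p z S"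
      by (intro Gsmult[OF cR] Gs_diff h1 h2)
    show ?thesis
    proof (rule Gcong[OF h3], intro allI impI)
      fix K :: nat assume K: "K \<ge> 1"
      have nz1: "(of_nat K + of_nat i :: complex) \<noteq> 0"
        by (metis K add_is_0 not_one_le_zero of_nat_add of_nat_eq_0_iff)
      have nz2: "(of_nat K + of_nat j :: complex) \<noteq> 0"
        by (metis K add_is_0 not_one_le_zero of_nat_add of_nat_eq_0_iff)
      have nz3: "(of_int (int j) - of_int (int i) :: complex) \<noteq> 0" using assms(1) by simp
      show "fr i a K * fr j b K = c * (fr i a K * fr j b' K - fr i a' K * fr j b K)"
      proof -
        define x where "x = (of_nat K + of_nat i :: complex)"
        define y where "y = (of_nat K + of_nat j :: complex)"
        have d: "(of_int (int j) - of_int (int i) :: complex) = y - x" unfolding x_def y_def by simp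
        have nzp: "x ^ a' \<noteq> 0" "x \<noteq> 0" "y ^ b' \<noteq> 0" "y \<noteq> 0" "y - x \<noteq> 0"
          using nz1 nz2 nz3 d unfolding x_def y_def by auto
        show ?thesis unfolding fr_def c_def a b x_def[symmetric] y_def[symmetric] d using nzp
          by (simp add: field_simps)
      qed
    qed
  qed
qed

definition basis :: "(nat \<times> nat) set \<Rightarrow> (nat \<Rightarrow> complex) set" where
  "basis S = range (\<lambda>e K. of_nat K ^ e) \<union> (\<lambda>(i,a). fr i a) ` S"

lemma Gs_mult_left:
  assumes "f \<in> Gs p z S1" "b \<in> basis S2"
    and B: "\<And>b1 b2. b1 \<in> basis S1 \<Longrightarrow> b2 \<in> basis S2 \<Longrightarrow> (\<lambda>K. b1 K * b2 K) \<in> Gs p z S3"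
  shows "(\<lambda>K. f K * b K) \<in> Gs p z S3"
  using assms(1)
proof (induction rule: Gs.induct)
  case Gzero then show ?case using Gs.Gzero by simp
next
  case (Gpoly e) then show ?case using B[OF _ assms(2)] by (auto simp: basis_def)
next
  case (Gfrac i a) then show ?case using B[OF _ assms(2)] by (force simp: basis_def)
next
  case (Gadd f g) then show ?case using Gs.Gadd[OF Gadd.IH] by (simp add: distrib_right)
next
  case (Gsmult r f) then show ?case using Gs.Gsmult[OF Gsmult.hyps(1) Gsmult.IH] by (simp add: mult.assoc)
next
  case (Gcong f g) then show ?case by (intro Gs.Gcong[OF Gcong.IH]) auto
qed

lemma Gs_mult:
  assumes "f \<in> Gs p z S1" "g \<in> Gs p z S2"
    and B: "\<And>b1 b2. b1 \<in> basis S1 \<Longrightarrow> b2 \<in> basis S2 \<Longrightarrow> (\<lambda>K. b1 K * b2 K) \<in> Gs p z S3"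
  shows "(\<lambda>K. f K * g K) \<in> Gs p z S3"
  using assms(2)
proof (induction rule: Gs.induct)
  case Gzero then show ?case using Gs.Gzero by simp
next
  case (Gpoly e) then show ?case using Gs_mult_left[OF assms(1) _ B] by (auto simp: basis_def)
next
  case (Gfrac i a) then show ?case using Gs_mult_left[OF assms(1) _ B] by (force simp: basis_def)
next
  case (Gadd f g) then show ?case using Gs.Gadd[OF Gadd.IH] by (simp add: distrib_left)
next
  case (Gsmult r g) then show ?case using Gs.Gsmult[OF Gsmult.hyps(1) Gsmult.IH] by (simp add: mult.left_commute)
next
  case (Gcong f g) then show ?case by (intro Gs.Gcong[OF Gcong.IH]) auto
qed

lemma G_mult:
  assumes "f \<in> G p z w1" "g \<in> G p z w2"
  shows "(\<lambda>K. f K * g K) \<in> G p z (w1 + w2)"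
proof (rule Gs_mult[OF assms])
  fix b1 b2 assume b1: "b1 \<in> basis {(i, a). a \<le> w1}" and b2: "b2 \<in> basis {(i, a). a \<le> w2}"
  let ?S = "{(i, a). a \<le> w1 + w2}"
  show "(\<lambda>K. b1 K * b2 K) \<in> Gs p z ?S"
  proof -
    { fix e e' have "(\<lambda>K. (of_nat K :: complex) ^ e * of_nat K ^ e') \<in> Gs p z ?S"
        using Gpoly[of "e + e'" p z ?S] by (simp add: power_add) }
    moreover
    { fix e i a assume "a \<le> w2"
      then have "(\<lambda>K. of_nat K ^ e * fr i a K) \<in> Gs p z ?S" by (intro poly_frac) auto }
    moreover
    { fix e i a assume "a \<le> w1"
      then have "(\<lambda>K. of_nat K ^ e * fr i a K) \<in> Gs p z ?S" by (intro poly_frac) auto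
      then have "(\<lambda>K. fr i a K * of_nat K ^ e) \<in> Gs p z ?S" by (simp add: mult.commute) }
    moreover
    { fix i a j b assume ab: "a \<le> w1" "b \<le> w2"
      have "(\<lambda>K. fr i a K * fr j b K) \<in> Gs p z ?S"
      proof (cases "i = j")
        case True
        then show ?thesis using Gfrac[of i "a + b" ?S p z] ab by (simp add: frac_frac_same)
      next
        case False
        then show ?thesis using ab by (intro frac_frac_diff) auto
      qed }
    ultimately show ?thesis using b1 b2 unfolding basis_def by auto
  qed
qed

lemma poch_G:
  assumes "A \<ge> 1"
  shows "(\<lambda>K. of_nat K ^ e / pochhammer (of_nat K) (Suc n) ^ A) \<in> G p z A"
proof -
  have prodI: "(\<lambda>K. \<Prod>i\<in>I. fr i A K) \<in> Gs p z (I \<times> {..A})" if "finite I" for I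
    using that
  proof (induction I rule: finite_induct)
    case empty
    then show ?case using Gpoly[of 0 p z "{} \<times> {..A}"] by simp
  next
    case (insert j I)
    let ?S = "insert j I \<times> {..A}"
    have "(\<lambda>K. (\<Prod>i\<in>I. fr i A K) * fr j A K) \<in> Gs p z ?S"
    proof (rule Gs_mult[OF insert.IH Gfrac[of j A "{(j,A)}"]])
      show "(j, A) \<in> {(j, A)}" by simp
      fix b1 b2 assume b1: "b1 \<in> basis (I \<times> {..A})" and b2: "b2 \<in> basis {(j, A)}"
      { fix e e' have "(\<lambda>K. (of_nat K :: complex) ^ e * of_nat K ^ e') \<in> Gs p z ?S"
          using Gpoly[of "e + e'" p z ?S] by (simp add: power_add) }
      moreover
      { fix e have "(\<lambda>K. of_nat K ^ e * fr j A K) \<in> Gs p z ?S" by (intro poly_frac) auto }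
      moreover
      { fix e i a assume "i \<in> I" "a \<le> A"
        then have "(\<lambda>K. of_nat K ^ e * fr i a K) \<in> Gs p z ?S" by (intro poly_frac) auto
        then have "(\<lambda>K. fr i a K * of_nat K ^ e) \<in> Gs p z ?S" by (simp add: mult.commute) }
      moreover
      { fix i a assume "i \<in> I" "a \<le> A"
        then have "(\<lambda>K. fr i a K * fr j A K) \<in> Gs p z ?S"
          using insert.hyps by (intro frac_frac_diff) auto }
      ultimately show "(\<lambda>K. b1 K * b2 K) \<in> Gs p z ?S" using b1 b2 unfolding basis_def by auto
    qed
    then show ?case using insert.hyps by (simp add: mult.commute)
  qed
  have P: "(\<lambda>K. \<Prod>i\<in>{..<Suc n}. fr i A K) \<in> G p z A"
    by (rule Gs_mono[OF prodI]) auto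
  have "(\<lambda>K. of_nat K ^ e * (\<Prod>i\<in>{..<Suc n}. fr i A K)) \<in> G p z (0 + A)"
    by (rule G_mult[OF _ P]) (rule Gpoly)
  moreover have "of_nat K ^ e * (\<Prod>i\<in>{..<Suc n}. fr i A K) = of_nat K ^ e / pochhammer (of_nat K) (Suc n) ^ A" for K
    by (simp add: fr_def pochhammer_prod prod_dividef power_one_over divide_inverse prod_power_distrib[symmetric] atLeast0LessThan
         flip: power_inverse prod_inversef)
  ultimately show ?thesis by simp
qed

lemma summable_poly_geom:
  assumes "0 \<le> q" "q < (1::real)"
  shows "summable (\<lambda>n. real n ^ E * q ^ n)"
proof (cases "q = 0")
  case True
  have "summable (\<lambda>n. if n = 0 then real n ^ E * q ^ n else 0)" by simp
  moreover have "(\<lambda>n. if n = 0 then real n ^ E * q ^ n else 0) = (\<lambda>n. real n ^ E * q ^ n)"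
    using True by (auto simp: fun_eq_iff)
  ultimately show ?thesis by simp
next
  case False
  then have q: "0 < q" using assms by simp
  define r where "r = sqrt q"
  have "sqrt q < sqrt 1" using assms by (subst real_sqrt_less_iff) simp
  then have r: "0 < r" "r < 1" using q unfolding r_def by auto
  have "(\<lambda>n. real n ^ E * r ^ n) \<longlonglongrightarrow> 0" using r by real_asymp
  then have "eventually (\<lambda>n. real n ^ E * r ^ n < 1) sequentially"
    by (rule order_tendstoD) simp
  then have ev: "eventually (\<lambda>n. norm (real n ^ E * q ^ n) \<le> r ^ n) sequentially"
  proof eventually_elim
    case (elim n)
    have "q ^ n = r ^ n * r ^ n" unfolding r_def using q
      by (simp add: power_mult_distrib[symmetric])
    then have "real n ^ E * q ^ n = (real n ^ E * r ^ n) * r ^ n" by simp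
    also have "\<dots> \<le> 1 * r ^ n" using elim r by (intro mult_right_mono) auto
    finally show ?case using q by simp
  qed
  show ?thesis
    by (rule summable_comparison_test_ev[OF ev]) (use r in \<open>simp add: summable_geometric\<close>)
qed

definition Box :: "nat \<Rightarrow> (nat \<Rightarrow> nat) set" where
  "Box d = {k. (\<forall>j<d. 1 \<le> k j) \<and> (\<forall>j\<ge>d. k j = 0)}"

lemma box_summable:
  fixes g :: "nat \<Rightarrow> nat \<Rightarrow> real"
  assumes "\<And>j. j < d \<Longrightarrow> g j summable_on {1..}" "\<And>j K. g j K \<ge> 0"
  shows "(\<lambda>k. \<Prod>j<d. g j (k j)) summable_on Box d"
  using assms(1)
proof (induction d)
  case 0
  have "Box 0 = {\<lambda>_. 0}" by (auto simp: Box_def)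
  then show ?case by simp
next
  case (Suc d)
  have IH: "(\<lambda>k. \<Prod>j<d. g j (k j)) summable_on Box d" using Suc by auto
  have gd: "g d summable_on {1..}" using Suc by auto
  have img: "Box (Suc d) = (\<lambda>(k,x). k(d := x)) ` (Box d \<times> {1..})"
  proof (intro equalityI subsetI)
    fix k assume k: "k \<in> Box (Suc d)"
    then have "k = (\<lambda>(k,x). k(d := x)) (k(d := 0), k d)" "(k(d := 0), k d) \<in> Box d \<times> {1..}"
      by (auto simp: Box_def)
    then show "k \<in> (\<lambda>(k,x). k(d := x)) ` (Box d \<times> {1..})" by blast
  qed (auto simp: Box_def)
  have inj: "inj_on (\<lambda>(k,x). k(d := x)) (Box d \<times> {1..})"
  proof (rule inj_onI, clarsimp)
    fix k x k' x' assume kk: "k \<in> Box d" "k' \<in> Box d" and eq: "k(d := x) = k'(d := x')"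
    have "x = x'" using fun_cong[OF eq, of d] by simp
    moreover have "k = k'"
    proof
      fix j show "k j = k' j" using fun_cong[OF eq, of j] kk by (cases "j = d") (auto simp: Box_def)
    qed
    ultimately show "k = k' \<and> x = x'" by simp
  qed
  have prodeq: "(\<Prod>j<Suc d. g j ((k(d := x)) j)) = (\<Prod>j<d. g j (k j)) * g d x" for k x
    by (simp add: lessThan_Suc)
  have "(\<lambda>(k,x). (\<Prod>j<d. g j (k j)) * g d x) summable_on Box d \<times> {1..}"
  proof (rule summable_on_SigmaI[where g = "\<lambda>k. (\<Prod>j<d. g j (k j)) * infsum (g d) {1..}"])
    fix k assume "k \<in> Box d"
    show "((\<lambda>x. case (k, x) of (k, x) \<Rightarrow> (\<Prod>j<d. g j (k j)) * g d x) has_sum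
          (\<Prod>j<d. g j (k j)) * infsum (g d) {1..}) {1..}"
      using gd by (simp add: has_sum_cmult_right)
  next
    show "(\<lambda>k. (\<Prod>j<d. g j (k j)) * infsum (g d) {1..}) summable_on Box d"
      using IH by (rule summable_on_cmult_left)
  qed (auto intro: prod_nonneg mult_nonneg_nonneg assms(2))
  then have "(\<lambda>k. \<Prod>j<Suc d. g j (k j)) \<circ> (\<lambda>(k,x). k(d := x)) summable_on Box d \<times> {1..}"
    by (simp add: o_def case_prod_unfold prodeq)
  then show ?case unfolding img by (subst summable_on_reindex[OF inj])
qed

definition CSf :: "(nat \<Rightarrow> complex) \<Rightarrow> nat \<Rightarrow> (nat \<Rightarrow> nat set) \<Rightarrow> (nat \<Rightarrow> nat \<Rightarrow> complex) \<Rightarrow> (nat \<Rightarrow> nat) \<Rightarrow> complex" where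
  "CSf z d J h k = (\<Prod>j<d. uJ z (J j) ^ k j * h j (k j))"

definition CS :: "(nat \<Rightarrow> complex) \<Rightarrow> nat \<Rightarrow> (nat \<Rightarrow> nat set) \<Rightarrow> (nat \<Rightarrow> nat \<Rightarrow> complex) \<Rightarrow> complex" where
  "CS z d J h = infsum (CSf z d J h) (chain_idx d)"

lemma chain_sub_Box: "chain_idx d \<subseteq> Box d"
  by (auto simp: chain_idx_def Box_def)

lemma geom_growth_summable:
  assumes "norm (u::complex) < 1" "\<forall>K\<ge>1. norm (h K) \<le> C * real K ^ E"
  shows "(\<lambda>K. \<bar>C\<bar> * real K ^ E * norm u ^ K) summable_on {1..}"
proof -
  have "summable (\<lambda>K. real K ^ E * norm u ^ K)" using assms(1) by (intro summable_poly_geom) auto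
  then have "(\<lambda>K. real K ^ E * norm u ^ K) summable_on UNIV"
    by (subst summable_on_UNIV_nonneg_real_iff) auto
  then have "(\<lambda>K. real K ^ E * norm u ^ K) summable_on {1..}"
    by (rule summable_on_subset) auto
  then show ?thesis by (subst mult.assoc) (rule summable_on_cmult_right)
qed

lemma growth_bound:
  assumes "\<forall>K\<ge>1. norm (h K) \<le> C * real K ^ E" "K \<ge> 1"
  shows "norm ((u::complex) ^ K * h K) \<le> \<bar>C\<bar> * real K ^ E * norm u ^ K"
proof -
  have "norm (u ^ K * h K) = norm u ^ K * norm (h K)" by (simp add: norm_mult norm_power)
  also have "\<dots> \<le> norm u ^ K * (\<bar>C\<bar> * real K ^ E)"
    using assms by (intro mult_left_mono) (auto intro: order_trans[OF _ mult_right_mono[OF abs_ge_self]])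
  finally show ?thesis by (simp add: algebra_simps)
qed

lemma tail_summable:
  assumes "norm (u::complex) < 1" "\<exists>C E. \<forall>K\<ge>1. norm (h K) \<le> C * real K ^ E" "L \<ge> 1"
  shows "(\<lambda>x. u ^ x * h x) summable_on {L..}"
proof -
  obtain C E where CE: "\<forall>K\<ge>1. norm (h K) \<le> C * real K ^ E" using assms by blast
  have "(\<lambda>x. norm (u ^ x * h x)) summable_on {1..}"
    by (rule Infinite_Sum.abs_summable_on_comparison_test'[OF geom_growth_summable[OF assms(1) CE]])
       (use growth_bound[OF CE] in auto)
  then have "(\<lambda>x. u ^ x * h x) summable_on {1..}" by (rule abs_summable_summable)
  then show ?thesis by (rule summable_on_subset_banach) (use assms in auto)
qed

lemma CS_summable:
  assumes "\<forall>j<d. norm (uJ z (J j)) < 1" "\<forall>j<d. \<exists>C E. \<forall>K\<ge>1. norm (h j K) \<le> C * real K ^ E"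
  shows "CSf z d J h summable_on chain_idx d"
proof -
  have "\<forall>j. \<exists>CE. j < d \<longrightarrow> (\<forall>K\<ge>1. norm (h j K) \<le> fst CE * real K ^ snd CE)"
    using assms(2) by auto
  from choice[OF this] obtain CE where CE0: "\<forall>j. j < d \<longrightarrow> (\<forall>K\<ge>1. norm (h j K) \<le> fst (CE j) * real K ^ snd (CE j))"
    by blast
  define C where "C j = fst (CE j)" for j
  define E where "E j = snd (CE j)" for j
  have CE: "\<forall>j<d. \<forall>K\<ge>1. norm (h j K) \<le> C j * real K ^ E j" using CE0 by (simp add: C_def E_def)
  define g where "g j K = \<bar>C j\<bar> * real K ^ E j * norm (uJ z (J j)) ^ K" for j K
  have "(\<lambda>k. \<Prod>j<d. g j (k j)) summable_on Box d"
  proof (rule box_summable)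
    fix j assume "j < d"
    then show "g j summable_on {1..}" unfolding g_def
      using geom_growth_summable[of "uJ z (J j)" "h j" "C j" "E j"] assms(1) CE by auto
  next
    fix j K show "g j K \<ge> 0" by (simp add: g_def)
  qed
  then have "(\<lambda>k. norm (CSf z d J h k)) summable_on Box d"
  proof (rule Infinite_Sum.abs_summable_on_comparison_test')
    fix k assume k: "k \<in> Box d"
    have "norm (CSf z d J h k) = (\<Prod>j<d. norm (uJ z (J j) ^ k j * h j (k j)))"
      by (simp add: CSf_def prod_norm)
    also have "\<dots> \<le> (\<Prod>j<d. g j (k j))"
      by (rule prod_mono) (use k CE growth_bound in \<open>auto simp: Box_def g_def\<close>)
    finally show "norm (CSf z d J h k) \<le> (\<Prod>j<d. g j (k j))" .
  qed
  then have "CSf z d J h summable_on Box d" by (rule abs_summable_summable)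
  then show ?thesis by (rule summable_on_subset_banach) (rule chain_sub_Box)
qed

lemma summable_on_diff':
  fixes f g :: "'a \<Rightarrow> complex"
  assumes "f summable_on A" "g summable_on A"
  shows "(\<lambda>x. f x - g x) summable_on A"
  using summable_on_add[OF assms(1) summable_on_uminus[THEN iffD2, OF assms(2)]] by simp

lemma infsum_diff':
  fixes f g :: "'a \<Rightarrow> complex"
  assumes "f summable_on A" "g summable_on A"
  shows "infsum (\<lambda>x. f x - g x) A = infsum f A - infsum g A"
  using infsum_add[OF assms(1) summable_on_uminus[THEN iffD2, OF assms(2)]]
  by (simp add: infsum_uminus)

lemma summable_on_sum':
  fixes f :: "'i \<Rightarrow> 'a \<Rightarrow> complex"
  assumes "\<And>i. i \<in> I \<Longrightarrow> f i summable_on A"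
  shows "(\<lambda>x. \<Sum>i\<in>I. f i x) summable_on A"
  using assms
  by (induction I rule: infinite_finite_induct) (auto intro: summable_on_add)

lemma infsum_sum':
  fixes f :: "'i \<Rightarrow> 'a \<Rightarrow> complex"
  assumes "\<And>i. i \<in> I \<Longrightarrow> f i summable_on A"
  shows "infsum (\<lambda>x. \<Sum>i\<in>I. f i x) A = (\<Sum>i\<in>I. infsum (f i) A)"
  using assms
proof (induction I rule: infinite_finite_induct)
  case (insert i I)
  have "infsum (\<lambda>x. f i x + (\<Sum>i\<in>I. f i x)) A = infsum (f i) A + infsum (\<lambda>x. \<Sum>i\<in>I. f i x) A"
    using insert by (intro infsum_add summable_on_sum') auto
  then show ?case using insert by simp
qed auto

lemma poly_growth: "\<exists>C E. \<forall>K\<ge>1. norm ((of_nat K :: complex) ^ e) \<le> C * real K ^ E"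
  by (intro exI[of _ 1] exI[of _ e]) (simp add: norm_power)

lemma tail_split:
  assumes "norm (u::complex) < 1" "\<exists>C E. \<forall>K\<ge>1. norm (h K) \<le> C * real K ^ E" "L \<ge> 1"
  shows "(\<Sum>\<^sub>\<infinity>x\<in>{L..}. u ^ x * h x) = u ^ L * h L + (\<Sum>\<^sub>\<infinity>x\<in>{Suc L..}. u ^ x * h x)"
proof -
  have "{L..} = insert L {Suc L..}" by auto
  then show ?thesis using tail_summable[OF assms(1,2), of "Suc L"] assms(3)
    by (simp add: infsum_insert)
qed

lemma poly_tail:
  assumes uR: "u \<in> coeff_alg p z" and un: "norm u < 1" and invR: "inverse (1 - u) \<in> coeff_alg p z"
  shows "\<exists>Q\<in>G p z 0. \<forall>L\<ge>1. (\<Sum>\<^sub>\<infinity>x\<in>{L..}. u ^ x * of_nat x ^ e) = u ^ L * Q L"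
proof (induction e rule: less_induct)
  case (less e)
  define T where "T l L = (\<Sum>\<^sub>\<infinity>x\<in>{L..}. u ^ x * (of_nat x :: complex) ^ l)" for l L
  have summ: "(\<lambda>x. u ^ x * (of_nat x :: complex) ^ l) summable_on {L..}" if "L \<ge> 1" for l L
    by (rule tail_summable[OF un poly_growth that])
  have "\<forall>l. \<exists>Q. l < e \<longrightarrow> Q \<in> G p z 0 \<and> (\<forall>L\<ge>1. T l L = u ^ L * Q L)"
    using less unfolding T_def by blast
  from choice[OF this] obtain Q where Q: "\<And>l. l < e \<Longrightarrow> Q l \<in> G p z 0"
    "\<And>l L. l < e \<Longrightarrow> L \<ge> 1 \<Longrightarrow> T l L = u ^ L * Q l L" by blast
  define c where "c l = (of_nat (e choose l) * (-1) ^ (e - l) :: complex)" for l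
  have cR: "c l \<in> coeff_alg p z" for l
    unfolding c_def by (intro coeff_alg.mult R_of_nat R_pow R_neg R_1)
  have u1: "1 - u \<noteq> 0" using un by auto
  have main: "T e L = u ^ L * (inverse (1 - u) * (of_nat L ^ e - (\<Sum>l<e. c l * (Q l L - of_nat L ^ l))))"
    if L: "L \<ge> 1" for L
  proof -
    have split: "T l L = u ^ L * of_nat L ^ l + T l (Suc L)" for l
      unfolding T_def by (rule tail_split[OF un poly_growth L])
    have "u * T e L = (\<Sum>\<^sub>\<infinity>x\<in>{L..}. u ^ Suc x * (of_nat x :: complex) ^ e)"
      unfolding T_def by (subst infsum_cmult_right'[symmetric]) (simp add: mult.assoc)
    also have "\<dots> = (\<Sum>\<^sub>\<infinity>y\<in>Suc ` {L..}. u ^ y * (of_nat (y - 1) :: complex) ^ e)"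
      by (subst infsum_reindex) (auto simp: o_def)
    also have "Suc ` {L..} = {Suc L..}"
      using image_add_atLeast[of 1 L] by (simp add: plus_1_eq_Suc)
    also have "(\<Sum>\<^sub>\<infinity>y\<in>{Suc L..}. u ^ y * (of_nat (y - 1) :: complex) ^ e)
             = (\<Sum>\<^sub>\<infinity>y\<in>{Suc L..}. \<Sum>l\<in>{..e}. c l * (u ^ y * of_nat y ^ l))"
    proof (rule infsum_cong)
      fix y assume "y \<in> {Suc L..}"
      then have "(of_nat (y - 1) :: complex) = of_nat y + (-1)" by (auto simp: of_nat_diff)
      then have "(of_nat (y - 1) :: complex) ^ e = (\<Sum>l\<le>e. of_nat (e choose l) * of_nat y ^ l * (-1) ^ (e - l))"
        using binomial_ring[of "of_nat y :: complex" "-1" e] by (simp only:)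
      then show "u ^ y * (of_nat (y - 1) :: complex) ^ e = (\<Sum>l\<in>{..e}. c l * (u ^ y * of_nat y ^ l))"
        by (simp add: c_def sum_distrib_left mult_ac)
    qed
    also have "\<dots> = (\<Sum>l\<in>{..e}. c l * T l (Suc L))"
      unfolding T_def using L
      by (subst infsum_sum') (auto intro!: summable_on_cmult_right summ simp: infsum_cmult_right')
    also have "\<dots> = c e * T e (Suc L) + (\<Sum>l<e. c l * T l (Suc L))"
      by (simp add: lessThan_Suc_atMost[symmetric])
    also have "c e = 1" by (simp add: c_def)
    finally have eq1: "u * T e L = T e (Suc L) + (\<Sum>l<e. c l * T l (Suc L))" by simp
    have eq2: "T l (Suc L) = u ^ L * (Q l L - of_nat L ^ l)" if "l < e" for l
      using split[of l] Q(2)[OF that L] by (simp add: algebra_simps)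
    have "(1 - u) * T e L = u ^ L * of_nat L ^ e - (\<Sum>l<e. c l * T l (Suc L))"
      using eq1 split[of e] by (simp add: algebra_simps)
    also have "(\<Sum>l<e. c l * T l (Suc L)) = u ^ L * (\<Sum>l<e. c l * (Q l L - of_nat L ^ l))"
      by (simp add: eq2 sum_distrib_left mult_ac)
    finally have "(1 - u) * T e L = u ^ L * (of_nat L ^ e - (\<Sum>l<e. c l * (Q l L - of_nat L ^ l)))"
      by (simp add: algebra_simps)
    then show ?thesis using u1 by (simp add: field_simps)
  qed
  define Qe where "Qe K = inverse (1 - u) * (of_nat K ^ e - (\<Sum>l<e. c l * (Q l K - of_nat K ^ l)))" for K
  have "Qe \<in> G p z 0" unfolding Qe_def
    by (intro Gsmult[OF invR] Gs_diff Gpoly Gs_sum Gsmult[OF cR] Q(1)) auto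
  moreover have "\<forall>L\<ge>1. T e L = u ^ L * Qe L" using main by (simp add: Qe_def)
  ultimately show ?case unfolding T_def by blast
qed

lemma fr_growth: "\<exists>C E. \<forall>K\<ge>1. norm (fr i a K) \<le> C * real K ^ E"
  by (rule Gs_growth[OF Gfrac[of i a "{(i,a)}"]]) simp

lemma frac_tail:
  assumes un: "norm (u::complex) < 1" "u \<noteq> 0" and L: "L \<ge> 1"
  shows "(\<Sum>\<^sub>\<infinity>x\<in>{L..}. u ^ x * fr i a x)
       = inverse u ^ i * ((\<Sum>\<^sub>\<infinity>y\<in>{L..}. u ^ y * fr 0 a y) - u ^ L * (\<Sum>r<i. u ^ r * fr r a L))"
proof -
  have "(\<Sum>\<^sub>\<infinity>x\<in>{L..}. u ^ x * fr i a x) = (\<Sum>\<^sub>\<infinity>x\<in>{L..}. inverse u ^ i * (u ^ (i + x) * fr 0 a (i + x)))"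
    by (rule infsum_cong) (use un in \<open>simp add: fr_def power_add field_simps\<close>)
  also have "\<dots> = inverse u ^ i * (\<Sum>\<^sub>\<infinity>x\<in>{L..}. u ^ (i + x) * fr 0 a (i + x))"
    by (rule infsum_cmult_right')
  also have "(\<Sum>\<^sub>\<infinity>x\<in>{L..}. u ^ (i + x) * fr 0 a (i + x)) = (\<Sum>\<^sub>\<infinity>y\<in>plus i ` {L..}. u ^ y * fr 0 a y)"
    by (subst infsum_reindex) (auto simp: o_def)
  also have "plus i ` {L..} = {i + L..}" by simp
  also have "(\<Sum>\<^sub>\<infinity>y\<in>{L..}. u ^ y * fr 0 a y)
      = (\<Sum>y\<in>{L..<i + L}. u ^ y * fr 0 a y) + (\<Sum>\<^sub>\<infinity>y\<in>{i + L..}. u ^ y * fr 0 a y)"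
  proof -
    have "{L..} = {L..<i + L} \<union> {i + L..}" by auto
    moreover have "infsum (\<lambda>y. u ^ y * fr 0 a y) ({L..<i + L} \<union> {i + L..})
       = infsum (\<lambda>y. u ^ y * fr 0 a y) {L..<i + L} + infsum (\<lambda>y. u ^ y * fr 0 a y) {i + L..}"
      by (rule infsum_Un_disjoint) (use tail_summable[OF un(1) fr_growth, of "i + L" 0 a] L in auto)
    ultimately show ?thesis by simp
  qed
  moreover have "(\<Sum>y\<in>{L..<i + L}. u ^ y * fr 0 a y) = u ^ L * (\<Sum>r<i. u ^ r * fr r a L)"
  proof -
    have "(\<Sum>y\<in>{L..<i + L}. u ^ y * fr 0 a y) = (\<Sum>r<i. u ^ (L + r) * fr 0 a (L + r))"
      by (rule sum.reindex_bij_witness[of _ "\<lambda>r. L + r" "\<lambda>y. y - L"]) auto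
    also have "\<dots> = u ^ L * (\<Sum>r<i. u ^ r * fr r a L)"
      by (simp add: sum_distrib_left power_add fr_def mult_ac add_ac)
    finally show ?thesis .
  qed
  ultimately show ?thesis by (simp add: algebra_simps)
qed

section \<open>Splitting off one variable\<close>

definition del :: "nat \<Rightarrow> (nat \<Rightarrow> 'a) \<Rightarrow> nat \<Rightarrow> 'a" where
  "del m f = (\<lambda>i. if i < m then f i else f (Suc i))"

definition ins :: "nat \<Rightarrow> nat \<Rightarrow> (nat \<Rightarrow> nat) \<Rightarrow> nat \<Rightarrow> nat" where
  "ins m x k = (\<lambda>i. if i < m then k i else if i = m then x else k (i - 1))"

definition Xr :: "nat \<Rightarrow> nat \<Rightarrow> (nat \<Rightarrow> nat) \<Rightarrow> nat set" where
  "Xr d m k = {x. 1 \<le> x \<and> (m < d \<longrightarrow> k m \<le> x) \<and> (0 < m \<longrightarrow> x \<le> k (m - 1))}"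

lemma chain_mono:
  assumes "k \<in> chain_idx d" "i \<le> j" "j < d"
  shows "k j \<le> k i"
  using assms(2,3)
proof (induction j rule: dec_induct)
  case base then show ?case by simp
next
  case (step j)
  then have "k (Suc j) \<le> k j" using assms(1) by (auto simp: chain_idx_def)
  then show ?case using step by simp
qed

lemma bij_ins:
  assumes "m \<le> d"
  shows "bij_betw (\<lambda>(k', x). ins m x k') (Sigma (chain_idx d) (Xr d m)) (chain_idx (Suc d))"
proof (rule bij_betw_byWitness[where f' = "\<lambda>k. (del m k, k m)"])
  show "\<forall>a\<in>Sigma (chain_idx d) (Xr d m). (\<lambda>k. (del m k, k m)) ((\<lambda>(k', x). ins m x k') a) = a"
    by (auto simp: del_def ins_def fun_eq_iff)
  show "\<forall>a'\<in>chain_idx (Suc d). (\<lambda>(k', x). ins m x k') ((\<lambda>k. (del m k, k m)) a') = a'"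
    by (auto simp: del_def ins_def fun_eq_iff)
  show "(\<lambda>(k', x). ins m x k') ` Sigma (chain_idx d) (Xr d m) \<subseteq> chain_idx (Suc d)"
  proof clarsimp
    fix k x assume k: "k \<in> chain_idx d" and x: "x \<in> Xr d m k"
    have kc: "\<And>i. Suc i < d \<Longrightarrow> k (Suc i) \<le> k i" "\<And>i. i < d \<Longrightarrow> 1 \<le> k i" "\<And>i. i \<ge> d \<Longrightarrow> k i = 0"
      using k by (auto simp: chain_idx_def)
    have xr: "1 \<le> x" "m < d \<Longrightarrow> k m \<le> x" "0 < m \<Longrightarrow> x \<le> k (m - 1)" using x by (auto simp: Xr_def)
    have "ins m x k (Suc i) \<le> ins m x k i" if "Suc i < Suc d" for i
    proof -
      consider "Suc i < m" | "Suc i = m" | "i = m" | "i > m" by linarith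
      then show ?thesis
      proof cases
        case 1 then show ?thesis using kc(1) assms by (simp add: ins_def)
      next
        case 2
        then have "m - 1 = i" "0 < m" by auto
        then show ?thesis using xr(3) 2 by (simp add: ins_def)
      next
        case 3 then show ?thesis using xr(2) that by (simp add: ins_def)
      next
        case 4 then show ?thesis using kc(1)[of "i - 1"] that by (simp add: ins_def)
      qed
    qed
    moreover have "1 \<le> ins m x k i" if "i < Suc d" for i
      using kc(2) xr(1) that assms by (auto simp: ins_def)
    moreover have "ins m x k i = 0" if "i \<ge> Suc d" for i
      using kc(3) that assms by (auto simp: ins_def)
    ultimately show "ins m x k \<in> chain_idx (Suc d)" by (auto simp: chain_idx_def)
  qed
  show "(\<lambda>k. (del m k, k m)) ` chain_idx (Suc d) \<subseteq> Sigma (chain_idx d) (Xr d m)"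
  proof clarsimp
    fix k assume k: "k \<in> chain_idx (Suc d)"
    have kc: "\<And>i. Suc i < Suc d \<Longrightarrow> k (Suc i) \<le> k i" "\<And>i. i < Suc d \<Longrightarrow> 1 \<le> k i"
      "\<And>i. i \<ge> Suc d \<Longrightarrow> k i = 0"
      using k by (auto simp: chain_idx_def)
    have "del m k (Suc i) \<le> del m k i" if "Suc i < d" for i
    proof -
      consider "Suc i < m" | "Suc i = m" | "i \<ge> m" by linarith
      then show ?thesis
      proof cases
        case 1 then show ?thesis using kc(1)[of i] that by (simp add: del_def)
      next
        case 2
        have "k (Suc (Suc i)) \<le> k i" using chain_mono[OF k, of i "Suc (Suc i)"] that by simp
        then show ?thesis using 2 by (simp add: del_def)
      next
        case 3 then show ?thesis using kc(1)[of "Suc i"] that by (simp add: del_def)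
      qed
    qed
    moreover have "1 \<le> del m k i" if "i < d" for i using kc(2) that by (simp add: del_def)
    moreover have "del m k i = 0" if "i \<ge> d" for i using kc(3) that assms by (simp add: del_def)
    ultimately have "del m k \<in> chain_idx d" by (auto simp: chain_idx_def)
    moreover have "k m \<in> Xr d m (del m k)"
    proof -
      have "1 \<le> k m" using kc(2) assms by simp
      moreover have "k (Suc m) \<le> k m" if "m < d" using kc(1) that by simp
      moreover have "k m \<le> k (m - 1)" if "0 < m" using kc(1)[of "m - 1"] that assms by simp
      ultimately show ?thesis by (auto simp: Xr_def del_def)
    qed
    ultimately show "del m k \<in> chain_idx d \<and> k m \<in> Xr d m (del m k)" by simp
  qed
qed

lemma prod_split_at:
  assumes "m \<le> d"
  shows "(\<Prod>j<Suc d. F j) = F m * (\<Prod>j<d. F (if j < m then j else Suc j))"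
proof -
  define \<sigma> where "\<sigma> j = (if j < m then j else Suc j)" for j
  have inj: "inj_on \<sigma> {..<d}" by (auto simp: inj_on_def \<sigma>_def split: if_splits)
  have img: "{..<Suc d} = insert m (\<sigma> ` {..<d})"
  proof (intro equalityI subsetI)
    fix j assume j: "j \<in> {..<Suc d}"
    show "j \<in> insert m (\<sigma> ` {..<d})"
    proof (cases "j < m")
      case True then show ?thesis using assms by (auto simp: \<sigma>_def image_iff intro!: bexI[of _ j])
    next
      case False
      then show ?thesis using j by (cases "j = m") (auto simp: \<sigma>_def image_iff intro!: bexI[of _ "j - 1"])
    qed
  qed (use assms in \<open>auto simp: \<sigma>_def\<close>)
  have "m \<notin> \<sigma> ` {..<d}" by (auto simp: \<sigma>_def)
  then have "(\<Prod>j<Suc d. F j) = F m * prod F (\<sigma> ` {..<d})" by (simp add: img)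
  also have "prod F (\<sigma> ` {..<d}) = (\<Prod>j<d. F (\<sigma> j))" by (rule prod.reindex[OF inj, unfolded o_def])
  finally show ?thesis by (simp add: \<sigma>_def)
qed

lemma sum_split_at:
  assumes "m \<le> d"
  shows "(\<Sum>j<Suc d. F j) = F m + (\<Sum>j<d. F (if j < m then j else Suc j))"
proof -
  define \<sigma> where "\<sigma> j = (if j < m then j else Suc j)" for j
  have inj: "inj_on \<sigma> {..<d}" by (auto simp: inj_on_def \<sigma>_def split: if_splits)
  have img: "{..<Suc d} = insert m (\<sigma> ` {..<d})"
  proof (intro equalityI subsetI)
    fix j assume j: "j \<in> {..<Suc d}"
    show "j \<in> insert m (\<sigma> ` {..<d})"
    proof (cases "j < m")
      case True then show ?thesis using assms by (auto simp: \<sigma>_def image_iff intro!: bexI[of _ j])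
    next
      case False
      then show ?thesis using j by (cases "j = m") (auto simp: \<sigma>_def image_iff intro!: bexI[of _ "j - 1"])
    qed
  qed (use assms in \<open>auto simp: \<sigma>_def\<close>)
  have "m \<notin> \<sigma> ` {..<d}" by (auto simp: \<sigma>_def)
  then have "(\<Sum>j<Suc d. F j) = F m + sum F (\<sigma> ` {..<d})" by (simp add: img)
  also have "sum F (\<sigma> ` {..<d}) = (\<Sum>j<d. F (\<sigma> j))" by (rule sum.reindex[OF inj, unfolded o_def])
  finally show ?thesis by (simp add: \<sigma>_def)
qed

lemma CSf_ins:
  assumes "m \<le> d"
  shows "CSf z (Suc d) J h (ins m x k) = CSf z d (del m J) (del m h) k * (uJ z (J m) ^ x * h m x)"
proof -
  have "(\<Prod>j<d. (\<lambda>j. uJ z (J j) ^ ins m x k j * h j (ins m x k j)) (if j < m then j else Suc j))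
      = (\<Prod>j<d. uJ z (del m J j) ^ k j * del m h j (k j))"
    by (rule prod.cong) (auto simp: ins_def del_def)
  moreover have "ins m x k m = x" by (simp add: ins_def)
  ultimately show ?thesis unfolding CSf_def
    by (subst prod_split_at[OF assms]) (simp add: mult.commute)
qed

lemma CS_decomp:
  assumes "m \<le> d" and summ: "CSf z (Suc d) J h summable_on chain_idx (Suc d)"
  shows "CS z (Suc d) J h
       = (\<Sum>\<^sub>\<infinity>k\<in>chain_idx d. CSf z d (del m J) (del m h) k * (\<Sum>\<^sub>\<infinity>x\<in>Xr d m k. uJ z (J m) ^ x * h m x))"
proof -
  have bij: "bij_betw (\<lambda>(k', x). ins m x k') (Sigma (chain_idx d) (Xr d m)) (chain_idx (Suc d))"
    by (rule bij_ins[OF assms(1)])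
  have "CS z (Suc d) J h = (\<Sum>\<^sub>\<infinity>kx\<in>Sigma (chain_idx d) (Xr d m). CSf z (Suc d) J h ((\<lambda>(k', x). ins m x k') kx))"
    unfolding CS_def by (rule infsum_reindex_bij_betw[OF bij, symmetric])
  also have "\<dots> = (\<Sum>\<^sub>\<infinity>k\<in>chain_idx d. \<Sum>\<^sub>\<infinity>x\<in>Xr d m k. CSf z (Suc d) J h (ins m x k))"
  proof -
    have "(\<lambda>kx. CSf z (Suc d) J h ((\<lambda>(k', x). ins m x k') kx)) summable_on Sigma (chain_idx d) (Xr d m)"
      using summ by (subst summable_on_reindex_bij_betw[OF bij])
    from infsum_Sigma_banach[OF this] show ?thesis by simp
  qed
  also have "\<dots> = (\<Sum>\<^sub>\<infinity>k\<in>chain_idx d. CSf z d (del m J) (del m h) k * (\<Sum>\<^sub>\<infinity>x\<in>Xr d m k. uJ z (J m) ^ x * h m x))"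
    by (simp add: CSf_ins[OF assms(1)] infsum_cmult_right')
  finally show ?thesis .
qed

lemma inner_split:
  fixes g :: "nat \<Rightarrow> complex"
  assumes "m \<le> d" "k \<in> chain_idx d" and summ: "g summable_on {1..}"
  shows "(\<Sum>\<^sub>\<infinity>x\<in>Xr d m k. g x)
       = infsum g {(if m < d then k m else 1)..}
         - (if 0 < m then infsum g {Suc (k (m - 1))..} else 0)"
proof -
  define lo where "lo = (if m < d then k m else 1)"
  have lo1: "lo \<ge> 1" using assms(2) by (auto simp: lo_def chain_idx_def)
  have sl: "g summable_on {L..}" if "L \<ge> 1" for L by (rule summable_on_subset_banach[OF summ]) (use that in auto)
  show ?thesis
  proof (cases "0 < m")
    case False
    then have "Xr d m k = {lo..}" using lo1 by (auto simp: Xr_def lo_def)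
    then show ?thesis using False by (simp add: lo_def)
  next
    case True
    define hi where "hi = k (m - 1)"
    have X: "Xr d m k = {lo..hi}" using True lo1 by (auto simp: Xr_def lo_def hi_def)
    have "lo \<le> hi"
    proof (cases "m < d")
      case True
      then show ?thesis using chain_mono[OF assms(2), of "m - 1" m] \<open>0 < m\<close> by (simp add: lo_def hi_def)
    next
      case False
      then show ?thesis using assms \<open>0 < m\<close> by (auto simp: lo_def hi_def chain_idx_def)
    qed
    then have "{lo..} = {lo..hi} \<union> {Suc hi..}" by auto
    then have "infsum g {lo..} = infsum g {lo..hi} + infsum g {Suc hi..}"
      using sl[of "Suc hi"] by (simp add: infsum_Un_disjoint)
    then show ?thesis using True X by (simp add: lo_def hi_def)
  qed
qed

definition wfJ :: "nat \<Rightarrow> nat \<Rightarrow> (nat \<Rightarrow> nat set) \<Rightarrow> bool" where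
  "wfJ p d J \<longleftrightarrow> d \<le> p \<and> (\<forall>j<d. J j \<subseteq> {..<p} \<and> J j \<noteq> {}) \<and> (\<forall>i<d. \<forall>j<d. i \<noteq> j \<longrightarrow> J i \<inter> J j = {})"

definition Vs :: "nat \<Rightarrow> int \<Rightarrow> (nat \<Rightarrow> complex) \<Rightarrow> complex set" where
  "Vs p W z = {y. \<exists>(N::nat) (q :: nat \<Rightarrow> nat) (s :: nat \<Rightarrow> nat \<Rightarrow> int) (J :: nat \<Rightarrow> nat \<Rightarrow> nat set)
            (a :: nat \<Rightarrow> complex).
           (\<forall>t<N. q t \<le> p
                \<and> (\<forall>i<q t. s t i \<ge> 1)
                \<and> (\<Sum>i<q t. s t i) \<le> W
                \<and> (\<forall>i<q t. J t i \<subseteq> {..<p} \<and> J t i \<noteq> {})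
                \<and> a t \<in> coeff_alg p z)
         \<and> y = (\<Sum>t<N. a t * La (q t) (s t) (\<lambda>i. 1 / (\<Prod>j\<in>J t i. z j)))}"

lemma Vs_0: "0 \<in> Vs p W z"
  unfolding Vs_def by (rule CollectI, rule exI[of _ 0]) simp

lemma Vs_La:
  assumes "q \<le> p" "\<forall>i<q. s i \<ge> 1" "(\<Sum>i<q. s i) \<le> W" "\<forall>i<q. J i \<subseteq> {..<p} \<and> J i \<noteq> {}"
  shows "La q s (\<lambda>i. 1 / (\<Prod>j\<in>J i. z j)) \<in> Vs p W z"
  unfolding Vs_def
  by (rule CollectI, rule exI[of _ 1], rule exI[of _ "\<lambda>_. q"], rule exI[of _ "\<lambda>_. s"],
      rule exI[of _ "\<lambda>_. J"], rule exI[of _ "\<lambda>_. 1"]) (use assms R_1 in auto)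

lemma Vs_add:
  assumes "x \<in> Vs p W z" "y \<in> Vs p W z"
  shows "x + y \<in> Vs p W z"
proof -
  obtain N1 :: nat and q1 :: "nat \<Rightarrow> nat" and s1 :: "nat \<Rightarrow> nat \<Rightarrow> int" and J1 :: "nat \<Rightarrow> nat \<Rightarrow> nat set" and a1 where 1: "\<forall>t<N1. q1 t \<le> p \<and> (\<forall>i<q1 t. s1 t i \<ge> 1) \<and> (\<Sum>i<q1 t. s1 t i) \<le> W
        \<and> (\<forall>i<q1 t. J1 t i \<subseteq> {..<p} \<and> J1 t i \<noteq> {}) \<and> a1 t \<in> coeff_alg p z"
    "x = (\<Sum>t<N1. a1 t * La (q1 t) (s1 t) (\<lambda>i. 1 / (\<Prod>j\<in>J1 t i. z j)))"
    using assms(1) unfolding Vs_def mem_Collect_eq by blast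
  obtain N2 :: nat and q2 :: "nat \<Rightarrow> nat" and s2 :: "nat \<Rightarrow> nat \<Rightarrow> int" and J2 :: "nat \<Rightarrow> nat \<Rightarrow> nat set" and a2 where 2: "\<forall>t<N2. q2 t \<le> p \<and> (\<forall>i<q2 t. s2 t i \<ge> 1) \<and> (\<Sum>i<q2 t. s2 t i) \<le> W
        \<and> (\<forall>i<q2 t. J2 t i \<subseteq> {..<p} \<and> J2 t i \<noteq> {}) \<and> a2 t \<in> coeff_alg p z"
    "y = (\<Sum>t<N2. a2 t * La (q2 t) (s2 t) (\<lambda>i. 1 / (\<Prod>j\<in>J2 t i. z j)))"
    using assms(2) unfolding Vs_def mem_Collect_eq by blast
  define q where "q t = (if t < N1 then q1 t else q2 (t - N1))" for t
  define s where "s t = (if t < N1 then s1 t else s2 (t - N1))" for t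
  define J where "J t = (if t < N1 then J1 t else J2 (t - N1))" for t
  define a where "a t = (if t < N1 then a1 t else a2 (t - N1))" for t
  define F where "F t = a t * La (q t) (s t) (\<lambda>i. 1 / (\<Prod>j\<in>J t i. z j))" for t
  have "(\<Sum>t<N1 + N2. F t) = (\<Sum>t<N1. F t) + (\<Sum>t<N2. F (N1 + t))"
    by (induction N2) auto
  moreover have "(\<Sum>t<N1. F t) = x" unfolding 1(2) F_def q_def s_def J_def a_def by (rule sum.cong) auto
  moreover have "(\<Sum>t<N2. F (N1 + t)) = y" unfolding 2(2) F_def q_def s_def J_def a_def by (rule sum.cong) auto
  moreover have "\<forall>t<N1 + N2. q t \<le> p \<and> (\<forall>i<q t. s t i \<ge> 1) \<and> (\<Sum>i<q t. s t i) \<le> W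
        \<and> (\<forall>i<q t. J t i \<subseteq> {..<p} \<and> J t i \<noteq> {}) \<and> a t \<in> coeff_alg p z"
  proof (intro allI impI)
    fix t assume t: "t < N1 + N2"
    show "q t \<le> p \<and> (\<forall>i<q t. s t i \<ge> 1) \<and> (\<Sum>i<q t. s t i) \<le> W
        \<and> (\<forall>i<q t. J t i \<subseteq> {..<p} \<and> J t i \<noteq> {}) \<and> a t \<in> coeff_alg p z"
    proof (cases "t < N1")
      case True then show ?thesis using 1(1) by (simp add: q_def s_def J_def a_def)
    next
      case False then show ?thesis using 2(1) t by (simp add: q_def s_def J_def a_def)
    qed
  qed
  ultimately show ?thesis unfolding Vs_def F_def
    by (intro CollectI exI[of _ "N1 + N2"] exI[of _ q] exI[of _ s] exI[of _ J] exI[of _ a]) auto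
qed

lemma Vs_smult:
  assumes "x \<in> Vs p W z" "r \<in> coeff_alg p z"
  shows "r * x \<in> Vs p W z"
proof -
  obtain N1 :: nat and q1 :: "nat \<Rightarrow> nat" and s1 :: "nat \<Rightarrow> nat \<Rightarrow> int" and J1 :: "nat \<Rightarrow> nat \<Rightarrow> nat set" and a1 where 1: "\<forall>t<N1. q1 t \<le> p \<and> (\<forall>i<q1 t. s1 t i \<ge> 1) \<and> (\<Sum>i<q1 t. s1 t i) \<le> W
        \<and> (\<forall>i<q1 t. J1 t i \<subseteq> {..<p} \<and> J1 t i \<noteq> {}) \<and> a1 t \<in> coeff_alg p z"
    "x = (\<Sum>t<N1. a1 t * La (q1 t) (s1 t) (\<lambda>i. 1 / (\<Prod>j\<in>J1 t i. z j)))"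
    using assms(1) unfolding Vs_def mem_Collect_eq by blast
  have "r * x = (\<Sum>t<N1. (r * a1 t) * La (q1 t) (s1 t) (\<lambda>i. 1 / (\<Prod>j\<in>J1 t i. z j)))"
    unfolding 1(2) by (simp add: sum_distrib_left mult.assoc)
  then show ?thesis unfolding Vs_def using 1(1) assms(2)
    by (intro CollectI exI[of _ N1] exI[of _ q1] exI[of _ s1] exI[of _ J1] exI[of _ "\<lambda>t. r * a1 t"])
       (auto intro: coeff_alg.mult)
qed

lemma Vs_diff: "x \<in> Vs p W z \<Longrightarrow> y \<in> Vs p W z \<Longrightarrow> x - y \<in> Vs p W z"
  using Vs_add[OF _ Vs_smult[OF _ R_neg[OF R_1]], of x p W z y] by simp

lemma Vs_sum: "(\<And>i. i \<in> I \<Longrightarrow> f i \<in> Vs p W z) \<Longrightarrow> sum f I \<in> Vs p W z"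
  by (induction I rule: infinite_finite_induct) (auto intro: Vs_0 Vs_add)

section \<open>Merging\<close>

lemma uJ_union:
  assumes "finite A" "finite B" "A \<inter> B = {}"
  shows "uJ z (A \<union> B) = uJ z A * uJ z B"
  unfolding uJ_def using assms by (simp add: prod.union_disjoint)

lemma CSf_merge:
  assumes "j0 < d" "finite (J j0)" "finite Jn" "J j0 \<inter> Jn = {}"
  shows "CSf z d J h k * (uJ z Jn ^ k j0 * \<phi> (k j0))
       = CSf z d (J(j0 := J j0 \<union> Jn)) (h(j0 := \<lambda>K. h j0 K * \<phi> K)) k"
proof -
  have j0: "j0 \<in> {..<d}" using assms by simp
  have rest: "(\<Prod>j\<in>{..<d} - {j0}. uJ z (J j) ^ k j * h j (k j))
      = (\<Prod>j\<in>{..<d} - {j0}. uJ z ((J(j0 := J j0 \<union> Jn)) j) ^ k j * (h(j0 := \<lambda>K. h j0 K * \<phi> K)) j (k j))"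
    by (rule prod.cong) auto
  show ?thesis unfolding CSf_def
    using assms
    by (simp add: prod.remove[OF _ j0] rest uJ_union power_mult_distrib mult_ac)
qed

lemma wfJ_norm:
  assumes "wfJ p d J" "\<forall>j<p. norm (z j) > 1" "j < d"
  shows "norm (uJ z (J j)) < 1" "uJ z (J j) \<noteq> 0"
  using uJ_norm[of "J j" p z] assms unfolding wfJ_def by auto

lemma CS_summable_G:
  assumes "wfJ p d J" "\<forall>j<p. norm (z j) > 1" "\<forall>j<d. h j \<in> Gs p z (S j)"
  shows "CSf z d J h summable_on chain_idx d"
  by (rule CS_summable) (use wfJ_norm[OF assms(1,2)] Gs_growth assms(3) in auto)

lemma del_lt: "m \<le> d \<Longrightarrow> j < d \<Longrightarrow> (if j < m then j else Suc j) < Suc d" by auto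

lemma wfJ_del:
  assumes "wfJ p (Suc d) J" "m \<le> d"
  shows "wfJ p d (del m J)"
proof -
  have "del m J j = J (if j < m then j else Suc j)" for j by (simp add: del_def)
  then show ?thesis using assms unfolding wfJ_def
    by (smt (verit) Suc_leD Suc_less_eq Suc_mono less_Suc_eq not_less_eq)
qed

lemma wfJ_merge:
  assumes "wfJ p (Suc d) J" "m \<le> d" "j0 < d"
  shows "wfJ p d ((del m J)(j0 := del m J j0 \<union> J m))"
proof -
  define \<sigma> where "\<sigma> j = (if j < m then j else Suc j)" for j
  have dJ: "del m J j = J (\<sigma> j)" for j by (simp add: del_def \<sigma>_def)
  have s1: "\<sigma> j < Suc d" if "j < d" for j using that by (simp add: \<sigma>_def)
  have s2: "\<sigma> j \<noteq> m" for j by (simp add: \<sigma>_def)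
  have s3: "\<sigma> i \<noteq> \<sigma> j" if "i \<noteq> j" for i j using that by (simp add: \<sigma>_def)
  have w: "Suc d \<le> p" "\<forall>j<Suc d. J j \<subseteq> {..<p} \<and> J j \<noteq> {}"
    "\<forall>i<Suc d. \<forall>j<Suc d. i \<noteq> j \<longrightarrow> J i \<inter> J j = {}"
    using assms(1) unfolding wfJ_def by auto
  have m: "m < Suc d" using assms by simp
  show ?thesis unfolding wfJ_def
  proof (intro conjI allI impI)
    show "d \<le> p" using w by simp
  next
    fix j assume j: "j < d"
    show "((del m J)(j0 := del m J j0 \<union> J m)) j \<subseteq> {..<p}"
      using w(2) s1[OF j] s1[OF assms(3)] m by (auto simp: dJ)
    show "((del m J)(j0 := del m J j0 \<union> J m)) j \<noteq> {}"
      using w(2) s1[OF j] s1[OF assms(3)] m by (auto simp: dJ)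
  next
    fix i j assume ij: "i < d" "j < d" "i \<noteq> j"
    have a: "J (\<sigma> i) \<inter> J (\<sigma> j) = {}" using w(3) s1 ij s3 by blast
    have b: "J (\<sigma> i) \<inter> J m = {}" "J (\<sigma> j) \<inter> J m = {}" using w(3) s1 ij s2 m by blast+
    show "((del m J)(j0 := del m J j0 \<union> J m)) i \<inter> ((del m J)(j0 := del m J j0 \<union> J m)) j = {}"
      using a b ij by (auto simp: dJ)
  qed
qed

lemma sum_upd:
  fixes f :: "nat \<Rightarrow> int"
  assumes "j0 < d"
  shows "(\<Sum>j<d. (f(j0 := f j0 + c)) j) = (\<Sum>j<d. f j) + c"
proof -
  have j0: "j0 \<in> {..<d}" using assms by simp
  have "(\<Sum>j\<in>{..<d} - {j0}. (f(j0 := f j0 + c)) j) = (\<Sum>j\<in>{..<d} - {j0}. f j)" by (rule sum.cong) auto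
  then show ?thesis by (simp add: sum.remove[OF _ j0])
qed

lemma CS_decomp_summable:
  assumes "m \<le> d" and summ: "CSf z (Suc d) J h summable_on chain_idx (Suc d)"
  shows "(\<lambda>k. CSf z d (del m J) (del m h) k * (\<Sum>\<^sub>\<infinity>x\<in>Xr d m k. uJ z (J m) ^ x * h m x)) summable_on chain_idx d"
proof -
  have bij: "bij_betw (\<lambda>(k', x). ins m x k') (Sigma (chain_idx d) (Xr d m)) (chain_idx (Suc d))"
    by (rule bij_ins[OF assms(1)])
  have "(\<lambda>kx. CSf z (Suc d) J h ((\<lambda>(k', x). ins m x k') kx)) summable_on Sigma (chain_idx d) (Xr d m)"
    using summ by (subst summable_on_reindex_bij_betw[OF bij])
  moreover have "(\<lambda>kx. CSf z (Suc d) J h ((\<lambda>(k', x). ins m x k') kx)) = (\<lambda>(k, x). CSf z (Suc d) J h (ins m x k))"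
    by (auto simp: fun_eq_iff)
  ultimately have "(\<lambda>(k, x). CSf z (Suc d) J h (ins m x k)) summable_on Sigma (chain_idx d) (Xr d m)" by simp
  from summable_on_Sigma_banach[OF this]
  show ?thesis by (simp add: CSf_ins[OF assms(1)] infsum_cmult_right')
qed

lemma del_alt: "del m f j = f (if j < m then j else Suc j)"
  by (simp add: del_def)

lemma CS_summable_Gw:
  assumes "wfJ p d J" "\<forall>j<p. norm (z j) > 1" "\<forall>j<d. h j \<in> G p z (\<omega> j)"
  shows "CSf z d J h summable_on chain_idx d"
  by (rule CS_summable_G[OF assms(1,2), where S = "\<lambda>j. {(i,a). a \<le> \<omega> j}"]) (use assms(3) in blast)

lemma del_upd: "del m (f(m := v)) = del m f"
  by (auto simp: del_def fun_eq_iff)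

lemma weight_merge:
  assumes "m \<le> d" "j0 < d"
  shows "(\<Sum>j<d. int (((del m \<omega>)(j0 := del m \<omega> j0 + \<omega> m)) j)) = (\<Sum>j<Suc d. int (\<omega> j))"
proof -
  have "(\<Sum>j<d. int (((del m \<omega>)(j0 := del m \<omega> j0 + \<omega> m)) j))
      = (\<Sum>j<d. ((\<lambda>j. int (del m \<omega> j))(j0 := int (del m \<omega> j0) + int (\<omega> m))) j)"
    by (rule sum.cong) auto
  also have "\<dots> = (\<Sum>j<d. int (del m \<omega> j)) + int (\<omega> m)"
    by (rule sum_upd[OF assms(2)])
  also have "\<dots> = (\<Sum>j<Suc d. int (\<omega> j))"
    by (subst sum_split_at[OF assms(1)]) (simp add: del_alt)
  finally show ?thesis .
qed

lemma weight_del: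
  assumes "m \<le> d"
  shows "(\<Sum>j<d. int (del m \<omega> j)) \<le> (\<Sum>j<Suc d. int (\<omega> j))"
  by (subst sum_split_at[OF assms(1)]) (simp add: del_alt)

lemma hG_del:
  assumes "\<forall>j<Suc d. h j \<in> G p z (\<omega> j)" "m \<le> d"
  shows "\<forall>j<d. del m h j \<in> G p z (del m \<omega> j)"
  using assms by (auto simp: del_def)

lemma hG_merge:
  assumes "\<forall>j<Suc d. h j \<in> G p z (\<omega> j)" "m \<le> d" "j0 < d" "\<phi> \<in> G p z (\<omega> m)"
  shows "\<forall>j<d. ((del m h)(j0 := \<lambda>K. del m h j0 K * \<phi> K)) j \<in> G p z (((del m \<omega>)(j0 := del m \<omega> j0 + \<omega> m)) j)"
proof (intro allI impI)
  fix j assume j: "j < d"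
  show "((del m h)(j0 := \<lambda>K. del m h j0 K * \<phi> K)) j \<in> G p z (((del m \<omega>)(j0 := del m \<omega> j0 + \<omega> m)) j)"
  proof (cases "j = j0")
    case True
    have "del m h j0 \<in> G p z (del m \<omega> j0)" using hG_del[OF assms(1,2)] assms(3) by simp
    then show ?thesis using True G_mult[OF _ assms(4)] by simp
  next
    case False
    then show ?thesis using hG_del[OF assms(1,2)] j by simp
  qed
qed

lemma peel:
  assumes zn: "\<forall>j<p. norm (z j) > 1"
    and md: "m \<le> d"
    and wf: "wfJ p (Suc d) J"
    and hG: "\<forall>j<Suc d. h j \<in> G p z (\<omega> j)"
    and hW: "(\<Sum>j<Suc d. int (\<omega> j)) \<le> W"
    and GEN: "\<And>J' h' \<omega>'. wfJ p d J' \<Longrightarrow> \<forall>j<d. h' j \<in> G p z (\<omega>' j) \<Longrightarrow> (\<Sum>j<d. int (\<omega>' j)) \<le> W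
               \<Longrightarrow> CS z d J' h' \<in> Vs p W z"
    and \<beta>: "\<beta> \<in> G p z (\<omega> m)" and \<gamma>: "\<gamma> \<in> G p z (\<omega> m)" and g': "g' \<in> G p z (\<omega> m)"
    and \<alpha>V: "\<alpha> * CS z (Suc d) J (h(m := g')) \<in> Vs p W z"
    and ident: "\<And>k. k \<in> chain_idx d \<Longrightarrow>
        (\<Sum>\<^sub>\<infinity>x\<in>Xr d m k. uJ z (J m) ^ x * h m x)
        = \<alpha> * (\<Sum>\<^sub>\<infinity>x\<in>Xr d m k. uJ z (J m) ^ x * g' x)
          + uJ z (J m) ^ (if m < d then k m else 1) * \<beta> (if m < d then k m else 1)
          + (if 0 < m then uJ z (J m) ^ k (m - 1) * \<gamma> (k (m - 1)) else 0)"
  shows "CS z (Suc d) J h \<in> Vs p W z"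
proof -
  define u where "u = uJ z (J m)"
  define R where "R k = CSf z d (del m J) (del m h) k" for k
  define I where "I k = (\<Sum>\<^sub>\<infinity>x\<in>Xr d m k. u ^ x * h m x)" for k
  define I' where "I' k = (\<Sum>\<^sub>\<infinity>x\<in>Xr d m k. u ^ x * g' x)" for k
  define A1 where "A1 k = R k * (u ^ (if m < d then k m else 1) * \<beta> (if m < d then k m else 1))" for k
  define A2 where "A2 k = R k * (if 0 < m then u ^ k (m - 1) * \<gamma> (k (m - 1)) else 0)" for k
  have hG': "\<forall>j<Suc d. (h(m := g')) j \<in> G p z (\<omega> j)" using hG g' by auto
  have s1: "CSf z (Suc d) J h summable_on chain_idx (Suc d)"
    by (rule CS_summable_Gw[OF wf zn hG])
  have s2: "CSf z (Suc d) J (h(m := g')) summable_on chain_idx (Suc d)"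
    by (rule CS_summable_Gw[OF wf zn hG'])
  have d1: "CS z (Suc d) J h = (\<Sum>\<^sub>\<infinity>k\<in>chain_idx d. R k * I k)"
    unfolding R_def I_def u_def by (rule CS_decomp[OF md s1])
  have d2: "CS z (Suc d) J (h(m := g')) = (\<Sum>\<^sub>\<infinity>k\<in>chain_idx d. R k * I' k)"
    unfolding R_def I'_def u_def using CS_decomp[OF md s2] by (simp add: del_upd)
  have sRI': "(\<lambda>k. R k * I' k) summable_on chain_idx d"
    unfolding R_def I'_def u_def using CS_decomp_summable[OF md s2] by (simp add: del_upd)
  have wJm0: "J m \<subseteq> {..<p}" "J m \<noteq> {}"
    using wf md unfolding wfJ_def by auto
  have wJm: "finite (J m)" "J m \<subseteq> {..<p}" "J m \<noteq> {}"
    using wJm0 finite_subset[OF wJm0(1)] by auto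
  have disj: "del m J j0 \<inter> J m = {}" "finite (del m J j0)" if "j0 < d" for j0
  proof -
    define j1 where "j1 = (if j0 < m then j0 else Suc j0)"
    have j1: "j1 < Suc d" "j1 \<noteq> m" using that by (auto simp: j1_def)
    have dj: "del m J j0 = J j1" by (simp add: del_alt j1_def)
    have "J j1 \<subseteq> {..<p}" "J j1 \<inter> J m = {}" using wf md j1 unfolding wfJ_def by auto
    then show "del m J j0 \<inter> J m = {}" "finite (del m J j0)"
      using finite_subset by (auto simp: dj)
  qed
  have A1V: "A1 summable_on chain_idx d \<and> infsum A1 (chain_idx d) \<in> Vs p W z"
  proof (cases "m < d")
    case True
    define J1 where "J1 = (del m J)(m := del m J m \<union> J m)"
    define h1 where "h1 = (del m h)(m := \<lambda>K. del m h m K * \<beta> K)"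
    define \<omega>1 where "\<omega>1 = (del m \<omega>)(m := del m \<omega> m + \<omega> m)"
    have eq: "A1 k = CSf z d J1 h1 k" for k
      unfolding A1_def R_def J1_def h1_def u_def using True disj[OF True] wJm
      by (simp add: CSf_merge)
    have wf1: "wfJ p d J1" unfolding J1_def by (rule wfJ_merge[OF wf md True])
    have hG1: "\<forall>j<d. h1 j \<in> G p z (\<omega>1 j)" unfolding h1_def \<omega>1_def by (rule hG_merge[OF hG md True \<beta>])
    have W1: "(\<Sum>j<d. int (\<omega>1 j)) \<le> W" unfolding \<omega>1_def using weight_merge[OF md True] hW by simp
    have "CSf z d J1 h1 summable_on chain_idx d" by (rule CS_summable_Gw[OF wf1 zn hG1])
    moreover have "CS z d J1 h1 \<in> Vs p W z" by (rule GEN[OF wf1 hG1 W1])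
    moreover have "A1 = CSf z d J1 h1" using eq by (rule ext)
    ultimately show ?thesis by (simp add: CS_def)
  next
    case False
    have eq: "A1 k = (u * \<beta> 1) * R k" for k unfolding A1_def using False by simp
    have wf1: "wfJ p d (del m J)" by (rule wfJ_del[OF wf md])
    have hG1: "\<forall>j<d. del m h j \<in> G p z (del m \<omega> j)" by (rule hG_del[OF hG md])
    have W1: "(\<Sum>j<d. int (del m \<omega> j)) \<le> W" using weight_del[OF md, of \<omega>] hW by simp
    have sR: "R summable_on chain_idx d" unfolding R_def by (rule CS_summable_Gw[OF wf1 zn hG1])
    have cR: "u * \<beta> 1 \<in> coeff_alg p z" unfolding u_def
      by (intro coeff_alg.mult uJ_R wJm Gs_R[OF \<beta>]) simp
    have "infsum A1 (chain_idx d) = (u * \<beta> 1) * CS z d (del m J) (del m h)"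
      unfolding eq CS_def R_def by (rule infsum_cmult_right')
    moreover have "A1 summable_on chain_idx d" unfolding eq by (rule summable_on_cmult_right[OF sR])
    ultimately show ?thesis using Vs_smult[OF GEN[OF wf1 hG1 W1] cR] by simp
  qed
  have A2V: "A2 summable_on chain_idx d \<and> infsum A2 (chain_idx d) \<in> Vs p W z"
  proof (cases "0 < m")
    case True
    define j0 where "j0 = m - 1"
    have j0: "j0 < d" using True md by (simp add: j0_def)
    define J2 where "J2 = (del m J)(j0 := del m J j0 \<union> J m)"
    define h2 where "h2 = (del m h)(j0 := \<lambda>K. del m h j0 K * \<gamma> K)"
    define \<omega>2 where "\<omega>2 = (del m \<omega>)(j0 := del m \<omega> j0 + \<omega> m)"
    have eq: "A2 k = CSf z d J2 h2 k" for k
      unfolding A2_def R_def J2_def h2_def u_def using True disj[OF j0] wJm j0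
      by (simp add: CSf_merge j0_def)
    have wf2: "wfJ p d J2" unfolding J2_def by (rule wfJ_merge[OF wf md j0])
    have hG2: "\<forall>j<d. h2 j \<in> G p z (\<omega>2 j)" unfolding h2_def \<omega>2_def by (rule hG_merge[OF hG md j0 \<gamma>])
    have W2: "(\<Sum>j<d. int (\<omega>2 j)) \<le> W" unfolding \<omega>2_def using weight_merge[OF md j0] hW by simp
    have "CSf z d J2 h2 summable_on chain_idx d" by (rule CS_summable_Gw[OF wf2 zn hG2])
    moreover have "CS z d J2 h2 \<in> Vs p W z" by (rule GEN[OF wf2 hG2 W2])
    moreover have "A2 = CSf z d J2 h2" using eq by (rule ext)
    ultimately show ?thesis by (simp add: CS_def)
  next
    case False
    then have "A2 = (\<lambda>_. 0)" by (auto simp: A2_def fun_eq_iff)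
    then show ?thesis using Vs_0 by simp
  qed
  have "CS z (Suc d) J h = (\<Sum>\<^sub>\<infinity>k\<in>chain_idx d. \<alpha> * (R k * I' k) + A1 k + A2 k)"
    unfolding d1
  proof (rule infsum_cong)
    fix k assume "k \<in> chain_idx d"
    from ident[OF this] show "R k * I k = \<alpha> * (R k * I' k) + A1 k + A2 k"
      unfolding I_def I'_def A1_def A2_def u_def by (simp add: algebra_simps)
  qed
  also have "\<dots> = \<alpha> * (\<Sum>\<^sub>\<infinity>k\<in>chain_idx d. R k * I' k) + infsum A1 (chain_idx d) + infsum A2 (chain_idx d)"
    using sRI' A1V A2V
    by (simp add: infsum_add summable_on_add summable_on_cmult_right infsum_cmult_right')
  also have "\<dots> = \<alpha> * CS z (Suc d) J (h(m := g')) + infsum A1 (chain_idx d) + infsum A2 (chain_idx d)"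
    by (simp add: d2)
  finally show ?thesis using \<alpha>V A1V A2V by (simp add: Vs_add)
qed

datatype bas = Pol nat | Fr nat nat

fun ev :: "bas \<Rightarrow> nat \<Rightarrow> complex" where
  "ev (Pol e) = (\<lambda>K. of_nat K ^ e)"
| "ev (Fr i a) = fr i a"

fun okb :: "bas \<Rightarrow> nat \<Rightarrow> bool" where
  "okb (Pol e) w = True"
| "okb (Fr i a) w = (1 \<le> a \<and> a \<le> w)"

fun pure :: "bas \<Rightarrow> bool" where
  "pure (Pol e) = False"
| "pure (Fr i a) = (i = 0)"

lemma ev_G: "okb b w \<Longrightarrow> ev b \<in> G p z w"
  by (cases b) (auto intro: Gpoly Gfrac)

definition GEN :: "nat \<Rightarrow> int \<Rightarrow> (nat \<Rightarrow> complex) \<Rightarrow> nat \<Rightarrow> bool" where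
  "GEN p W z d \<longleftrightarrow> (\<forall>J h \<omega>. wfJ p d J \<longrightarrow> (\<forall>j<d. h j \<in> G p z (\<omega> j)) \<longrightarrow> (\<Sum>j<d. int (\<omega> j)) \<le> W
      \<longrightarrow> CS z d J h \<in> Vs p W z)"

lemma all_pure:
  assumes wf: "wfJ p d J" and a: "\<forall>j<d. 1 \<le> a j \<and> a j \<le> \<omega> j" and W: "(\<Sum>j<d. int (\<omega> j)) \<le> W"
  shows "CS z d J (\<lambda>j. fr 0 (a j)) \<in> Vs p W z"
proof -
  have "CS z d J (\<lambda>j. fr 0 (a j)) = La d (\<lambda>i. int (a i)) (\<lambda>i. 1 / (\<Prod>j\<in>J i. z j))"
    unfolding CS_def La_def
  proof (rule infsum_cong)
    fix k assume "k \<in> chain_idx d"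
    show "CSf z d J (\<lambda>j. fr 0 (a j)) k = (\<Prod>i<d. (1 / (\<Prod>j\<in>J i. z j)) ^ k i / of_nat (k i) powi int (a i))"
      unfolding CSf_def by (rule prod.cong) (auto simp: uJ_def fr_def power_int_of_nat)
  qed
  moreover have "La d (\<lambda>i. int (a i)) (\<lambda>i. 1 / (\<Prod>j\<in>J i. z j)) \<in> Vs p W z"
  proof (rule Vs_La)
    show "d \<le> p" using wf by (simp add: wfJ_def)
    show "\<forall>i<d. 1 \<le> int (a i)" using a by auto
    have "(\<Sum>i<d. int (a i)) \<le> (\<Sum>i<d. int (\<omega> i))" by (rule sum_mono) (use a in auto)
    then show "(\<Sum>i<d. int (a i)) \<le> W" using W by simp
    show "\<forall>i<d. J i \<subseteq> {..<p} \<and> J i \<noteq> {}" using wf by (simp add: wfJ_def)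
  qed
  ultimately show ?thesis by simp
qed

lemma basis_case:
  assumes zn: "\<forall>j<p. norm (z j) > 1"
    and IH: "\<And>d'. d' < d \<Longrightarrow> GEN p W z d'"
    and wf: "wfJ p d J" and ok: "\<forall>j<d. okb (b j) (\<omega> j)" and W: "(\<Sum>j<d. int (\<omega> j)) \<le> W"
  shows "CS z d J (\<lambda>j. ev (b j)) \<in> Vs p W z"
  using wf ok W
proof (induction "card {j. j < d \<and> \<not> pure (b j)}" arbitrary: b rule: less_induct)
  case less
  show ?case
  proof (cases "\<exists>m<d. \<not> pure (b m)")
    case False
    define a where "a j = (case b j of Fr i a \<Rightarrow> a | Pol e \<Rightarrow> 0)" for j
    have bj: "b j = Fr 0 (a j)" if "j < d" for j
      using False that by (cases "b j") (auto simp: a_def)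
    have "CS z d J (\<lambda>j. ev (b j)) = CS z d J (\<lambda>j. fr 0 (a j))"
      unfolding CS_def CSf_def by (rule infsum_cong, rule prod.cong) (auto simp: bj)
    moreover have "\<forall>j<d. 1 \<le> a j \<and> a j \<le> \<omega> j" using less.prems(2) bj by fastforce
    ultimately show ?thesis using all_pure[OF less.prems(1) _ less.prems(3)] by simp
  next
    case True
    then obtain m where m: "m < d" "\<not> pure (b m)" by blast
    then obtain d' where d: "d = Suc d'" by (cases d) auto
    have md: "m \<le> d'" using m d by simp
    have GENd': "GEN p W z d'" using IH d by simp
    define h where "h j = ev (b j)" for j
    have hG: "\<forall>j<Suc d'. h j \<in> G p z (\<omega> j)" using less.prems(2) d by (auto simp: h_def intro: ev_G)
    have wf': "wfJ p (Suc d') J" using less.prems(1) d by simp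
    have W': "(\<Sum>j<Suc d'. int (\<omega> j)) \<le> W" using less.prems(3) d by simp
    have GEN': "\<And>J' h' \<omega>'. wfJ p d' J' \<Longrightarrow> \<forall>j<d'. h' j \<in> G p z (\<omega>' j) \<Longrightarrow> (\<Sum>j<d'. int (\<omega>' j)) \<le> W
               \<Longrightarrow> CS z d' J' h' \<in> Vs p W z" using GENd' unfolding GEN_def by blast
    have Jm: "J m \<subseteq> {..<p}" "J m \<noteq> {}" using less.prems(1) m unfolding wfJ_def by auto
    define u where "u = uJ z (J m)"
    have un: "norm u < 1" "u \<noteq> 0" unfolding u_def using uJ_norm[OF Jm zn] by auto
    have uR: "u \<in> coeff_alg p z" unfolding u_def by (rule uJ_R[OF Jm(1)])
    have uiR: "inverse u \<in> coeff_alg p z" unfolding u_def by (rule uJ_inv_R[OF Jm(1)])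
    have pz: "(\<Prod>j\<in>J m. z j) \<noteq> 0" using un unfolding u_def uJ_def by auto
    have u1R: "inverse (1 - u) \<in> coeff_alg p z" unfolding u_def by (rule uJ_one_minus_R[OF Jm pz])
    define lo where "lo k = (if m < d' then k m else 1)" for k :: "nat \<Rightarrow> nat"
    have lo1: "lo k \<ge> 1" if "k \<in> chain_idx d'" for k using that by (auto simp: lo_def chain_idx_def)
    have hi1: "k (m - 1) \<ge> 1" if "k \<in> chain_idx d'" "0 < m" for k
      using that md by (auto simp: chain_idx_def)
    have gsum: "(\<lambda>x. u ^ x * g x) summable_on {1..}" if "\<exists>C E. \<forall>K\<ge>1. norm (g K) \<le> C * real K ^ E" for g
      by (rule tail_summable[OF un(1) that]) simp
    have isplit: "(\<Sum>\<^sub>\<infinity>x\<in>Xr d' m k. u ^ x * g x)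
        = (\<Sum>\<^sub>\<infinity>x\<in>{lo k..}. u ^ x * g x) - (if 0 < m then (\<Sum>\<^sub>\<infinity>x\<in>{Suc (k (m - 1))..}. u ^ x * g x) else 0)"
      if "k \<in> chain_idx d'" "\<exists>C E. \<forall>K\<ge>1. norm (g K) \<le> C * real K ^ E" for k g
      unfolding lo_def by (rule inner_split[OF md that(1) gsum[OF that(2)]])
    show ?thesis
    proof (cases "b m")
      case (Pol e)
      obtain Q where Q: "Q \<in> G p z 0" "\<And>L. L \<ge> 1 \<Longrightarrow> (\<Sum>\<^sub>\<infinity>x\<in>{L..}. u ^ x * of_nat x ^ e) = u ^ L * Q L"
        using poly_tail[OF uR un(1) u1R, of e] by blast
      define \<gamma> where "\<gamma> K = of_nat K ^ e - Q K" for K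
      have QG: "Q \<in> G p z (\<omega> m)" by (rule G_mono[OF Q(1)]) simp
      have \<gamma>G: "\<gamma> \<in> G p z (\<omega> m)" unfolding \<gamma>_def by (intro G_mono[OF Gs_diff[OF Gpoly Q(1)]]) simp
      have hm: "h m = (\<lambda>K. of_nat K ^ e)" by (simp add: h_def Pol)
      have "CS z (Suc d') J h \<in> Vs p W z"
      proof (rule peel[OF zn md wf' hG W' GEN' QG \<gamma>G, where g' = "h m" and \<alpha> = 0])
        show "h m \<in> G p z (\<omega> m)" using hG m d by simp
        show "0 * CS z (Suc d') J (h(m := h m)) \<in> Vs p W z" using Vs_0 by simp
      next
        fix k assume k: "k \<in> chain_idx d'"
        have split: "(\<Sum>\<^sub>\<infinity>x\<in>{L..}. u ^ x * of_nat x ^ e) = u ^ L * of_nat L ^ e + (\<Sum>\<^sub>\<infinity>x\<in>{Suc L..}. u ^ x * of_nat x ^ e)"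
          if "L \<ge> 1" for L by (rule tail_split[OF un(1) poly_growth that])
        have up: "(\<Sum>\<^sub>\<infinity>x\<in>{Suc (k (m - 1))..}. u ^ x * of_nat x ^ e) = u ^ k (m - 1) * (Q (k (m - 1)) - of_nat (k (m - 1)) ^ e)"
          if "0 < m" using split[OF hi1[OF k that]] Q(2)[OF hi1[OF k that]] by (simp add: algebra_simps)
        have I: "(\<Sum>\<^sub>\<infinity>x\<in>Xr d' m k. u ^ x * of_nat x ^ e)
           = (\<Sum>\<^sub>\<infinity>x\<in>{lo k..}. u ^ x * of_nat x ^ e) - (if 0 < m then (\<Sum>\<^sub>\<infinity>x\<in>{Suc (k (m - 1))..}. u ^ x * of_nat x ^ e) else 0)"
          by (rule isplit[OF k poly_growth])
        have lo: "(\<Sum>\<^sub>\<infinity>x\<in>{lo k..}. u ^ x * of_nat x ^ e) = u ^ lo k * Q (lo k)" by (rule Q(2)[OF lo1[OF k]])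
        have main: "(\<Sum>\<^sub>\<infinity>x\<in>Xr d' m k. u ^ x * of_nat x ^ e)
            = u ^ lo k * Q (lo k) + (if 0 < m then u ^ k (m - 1) * \<gamma> (k (m - 1)) else 0)"
        proof (cases "0 < m")
          case True
          show ?thesis unfolding I lo up[OF True] using True by (simp add: \<gamma>_def algebra_simps)
        next
          case False
          show ?thesis unfolding I lo using False by simp
        qed
        show "(\<Sum>\<^sub>\<infinity>x\<in>Xr d' m k. uJ z (J m) ^ x * h m x) =
          0 * (\<Sum>\<^sub>\<infinity>x\<in>Xr d' m k. uJ z (J m) ^ x * h m x) +
          uJ z (J m) ^ (if m < d' then k m else 1) * Q (if m < d' then k m else 1) +
          (if 0 < m then uJ z (J m) ^ k (m - 1) * \<gamma> (k (m - 1)) else 0)"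
          unfolding u_def[symmetric] lo_def[symmetric] hm using main by simp
      qed
      then show ?thesis using d by (simp add: h_def[abs_def])
    next
      case (Fr i a)
      have i: "i \<noteq> 0" using m Fr by simp
      have a: "1 \<le> a" "a \<le> \<omega> m" using less.prems(2) m Fr by auto
      define \<alpha> where "\<alpha> = inverse u ^ i"
      define \<phi>1 where "\<phi>1 K = (\<Sum>r<i. u ^ r * fr r a K)" for K
      define \<phi>2 where "\<phi>2 K = u * (\<Sum>r<i. u ^ r * fr (Suc r) a K)" for K
      define \<beta> where "\<beta> K = - (\<alpha> * \<phi>1 K)" for K
      define \<gamma> where "\<gamma> K = \<alpha> * \<phi>2 K" for K
      have \<alpha>R: "\<alpha> \<in> coeff_alg p z" unfolding \<alpha>_def by (rule R_pow[OF uiR])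
      have \<phi>1G: "\<phi>1 \<in> G p z (\<omega> m)" unfolding \<phi>1_def
        by (intro Gs_sum Gsmult[OF R_pow[OF uR]] Gfrac) (use a in simp)
      have \<phi>2G: "\<phi>2 \<in> G p z (\<omega> m)" unfolding \<phi>2_def
        by (intro Gsmult[OF uR] Gs_sum Gsmult[OF R_pow[OF uR]] Gfrac) (use a in simp)
      have \<beta>G: "\<beta> \<in> G p z (\<omega> m)" unfolding \<beta>_def by (intro Gs_neg Gsmult[OF \<alpha>R] \<phi>1G)
      have \<gamma>G: "\<gamma> \<in> G p z (\<omega> m)" unfolding \<gamma>_def by (intro Gsmult[OF \<alpha>R] \<phi>2G)
      have g'G: "fr 0 a \<in> G p z (\<omega> m)" by (rule Gfrac) (use a in simp)
      have hm: "h m = fr i a" by (simp add: h_def Fr)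
      define b' where "b' = b(m := Fr 0 a)"
      have hb': "h(m := fr 0 a) = (\<lambda>j. ev (b' j))" by (auto simp: h_def b'_def fun_eq_iff)
      have lessc: "card {j. j < d \<and> \<not> pure (b' j)} < card {j. j < d \<and> \<not> pure (b j)}"
      proof -
        have eq: "{j. j < d \<and> \<not> pure (b' j)} = {j. j < d \<and> \<not> pure (b j)} - {m}" by (auto simp: b'_def)
        have mem: "m \<in> {j. j < d \<and> \<not> pure (b j)}" using m by simp
        have fin: "finite {j. j < d \<and> \<not> pure (b j)}" by simp
        show ?thesis unfolding eq by (rule card_Diff1_less[OF fin mem])
      qed
      have ok': "\<forall>j<d. okb (b' j) (\<omega> j)" using less.prems(2) a by (auto simp: b'_def)
      have CS': "CS z d J (\<lambda>j. ev (b' j)) \<in> Vs p W z"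
        by (rule less.hyps[OF lessc less.prems(1) ok' less.prems(3)])
      have "CS z (Suc d') J h \<in> Vs p W z"
      proof (rule peel[OF zn md wf' hG W' GEN' \<beta>G \<gamma>G g'G, where \<alpha> = \<alpha>])
        show "\<alpha> * CS z (Suc d') J (h(m := fr 0 a)) \<in> Vs p W z"
          unfolding hb' using Vs_smult[OF CS' \<alpha>R] d by (simp add: mult.commute)
      next
        fix k assume k: "k \<in> chain_idx d'"
        have ft: "(\<Sum>\<^sub>\<infinity>x\<in>{L..}. u ^ x * fr i a x)
            = \<alpha> * ((\<Sum>\<^sub>\<infinity>y\<in>{L..}. u ^ y * fr 0 a y) - u ^ L * \<phi>1 L)" if "L \<ge> 1" for L
          unfolding \<alpha>_def \<phi>1_def by (rule frac_tail[OF un that])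
        have sh: "u ^ Suc L * \<phi>1 (Suc L) = u ^ L * \<phi>2 L" for L
          unfolding \<phi>1_def \<phi>2_def by (simp add: fr_def sum_distrib_left mult_ac add_ac)
        have e1: "(\<Sum>\<^sub>\<infinity>x\<in>Xr d' m k. u ^ x * fr i a x)
           = (\<Sum>\<^sub>\<infinity>x\<in>{lo k..}. u ^ x * fr i a x) - (if 0 < m then (\<Sum>\<^sub>\<infinity>x\<in>{Suc (k (m - 1))..}. u ^ x * fr i a x) else 0)"
          by (rule isplit[OF k fr_growth])
        have e2: "(\<Sum>\<^sub>\<infinity>x\<in>Xr d' m k. u ^ x * fr 0 a x)
           = (\<Sum>\<^sub>\<infinity>x\<in>{lo k..}. u ^ x * fr 0 a x) - (if 0 < m then (\<Sum>\<^sub>\<infinity>x\<in>{Suc (k (m - 1))..}. u ^ x * fr 0 a x) else 0)"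
          by (rule isplit[OF k fr_growth])
        have e3: "(\<Sum>\<^sub>\<infinity>x\<in>{Suc (k (m - 1))..}. u ^ x * fr i a x)
            = \<alpha> * ((\<Sum>\<^sub>\<infinity>y\<in>{Suc (k (m - 1))..}. u ^ y * fr 0 a y) - u ^ k (m - 1) * \<phi>2 (k (m - 1)))"
          using ft[of "Suc (k (m - 1))"] sh[of "k (m - 1)"] by simp
        show "(\<Sum>\<^sub>\<infinity>x\<in>Xr d' m k. uJ z (J m) ^ x * h m x) =
          \<alpha> * (\<Sum>\<^sub>\<infinity>x\<in>Xr d' m k. uJ z (J m) ^ x * fr 0 a x) +
          uJ z (J m) ^ (if m < d' then k m else 1) * \<beta> (if m < d' then k m else 1) +
          (if 0 < m then uJ z (J m) ^ k (m - 1) * \<gamma> (k (m - 1)) else 0)"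
          unfolding u_def[symmetric] lo_def[symmetric] hm e1 e2 e3 ft[OF lo1[OF k]]
          by (simp add: \<beta>_def \<gamma>_def algebra_simps)
      qed
      then show ?thesis using d by (simp add: h_def[abs_def])
    qed
  qed
qed

lemma CSf_upd:
  assumes "n < d"
  shows "CSf z d J (h(n := f)) k = (uJ z (J n) ^ k n * f (k n)) * (\<Prod>j\<in>{..<d} - {n}. uJ z (J j) ^ k j * h j (k j))"
proof -
  have nn: "n \<in> {..<d}" using assms by simp
  have "(\<Prod>j\<in>{..<d} - {n}. uJ z (J j) ^ k j * (h(n := f)) j (k j)) = (\<Prod>j\<in>{..<d} - {n}. uJ z (J j) ^ k j * h j (k j))"
    by (rule prod.cong) auto
  then show ?thesis unfolding CSf_def by (simp add: prod.remove[OF _ nn])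
qed

lemma CS_cong_lt:
  assumes "\<forall>j<d. h j = h' j"
  shows "CS z d J h = CS z d J h'"
  unfolding CS_def CSf_def using assms by (intro infsum_cong prod.cong) auto

lemma gen_from_basis:
  assumes zn: "\<forall>j<p. norm (z j) > 1"
    and BAS: "\<And>J b \<omega>. wfJ p d J \<Longrightarrow> \<forall>j<d. okb (b j) (\<omega> j) \<Longrightarrow> (\<Sum>j<d. int (\<omega> j)) \<le> W
               \<Longrightarrow> CS z d J (\<lambda>j. ev (b j)) \<in> Vs p W z"
  shows "GEN p W z d"
proof -
  define Q where "Q n \<longleftrightarrow> (\<forall>J h \<omega>. wfJ p d J \<longrightarrow> (\<forall>j<d. h j \<in> G p z (\<omega> j))
      \<longrightarrow> (\<forall>j. n \<le> j \<and> j < d \<longrightarrow> (\<exists>b. okb b (\<omega> j) \<and> h j = ev b))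
      \<longrightarrow> (\<Sum>j<d. int (\<omega> j)) \<le> W \<longrightarrow> CS z d J h \<in> Vs p W z)" for n
  have Q0: "Q 0" unfolding Q_def
  proof (intro allI impI)
    fix J h \<omega> assume wf: "wfJ p d J" and hG: "\<forall>j<d. h j \<in> G p z (\<omega> j)"
      and hb: "\<forall>j. 0 \<le> j \<and> j < d \<longrightarrow> (\<exists>b. okb b (\<omega> j) \<and> h j = ev b)" and W: "(\<Sum>j<d. int (\<omega> j)) \<le> W"
    have "\<forall>j. \<exists>b. j < d \<longrightarrow> okb b (\<omega> j) \<and> h j = ev b" using hb by blast
    from choice[OF this] obtain B where B: "\<And>j. j < d \<Longrightarrow> okb (B j) (\<omega> j) \<and> h j = ev (B j)" by blast
    have "CS z d J h = CS z d J (\<lambda>j. ev (B j))" by (rule CS_cong_lt) (use B in auto)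
    also have "\<dots> \<in> Vs p W z" by (rule BAS[OF wf _ W]) (use B in auto)
    finally show "CS z d J h \<in> Vs p W z" .
  qed
  have Qs: "Q (Suc n)" if "n < d" "Q n" for n
    unfolding Q_def
  proof (intro allI impI)
    fix J h \<omega> assume wf: "wfJ p d J" and hG: "\<forall>j<d. h j \<in> G p z (\<omega> j)"
      and hb: "\<forall>j. Suc n \<le> j \<and> j < d \<longrightarrow> (\<exists>b. okb b (\<omega> j) \<and> h j = ev b)" and W: "(\<Sum>j<d. int (\<omega> j)) \<le> W"
    have hGf: "\<forall>j<d. (h(n := f)) j \<in> G p z (\<omega> j)" if "f \<in> G p z (\<omega> n)" for f
      using hG that by auto
    have sm: "CSf z d J (h(n := f)) summable_on chain_idx d" if "f \<in> G p z (\<omega> n)" for f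
      by (rule CS_summable_Gw[OF wf zn hGf[OF that]])
    have useQ: "CS z d J (h(n := ev b0)) \<in> Vs p W z" if b0: "okb b0 (\<omega> n)" for b0
    proof -
      have 1: "\<forall>j<d. (h(n := ev b0)) j \<in> G p z (\<omega> j)" using hG ev_G[OF b0] by auto
      have 2: "\<forall>j. n \<le> j \<and> j < d \<longrightarrow> (\<exists>b. okb b (\<omega> j) \<and> (h(n := ev b0)) j = ev b)"
      proof (intro allI impI)
        fix j assume j: "n \<le> j \<and> j < d"
        show "\<exists>b. okb b (\<omega> j) \<and> (h(n := ev b0)) j = ev b"
        proof (cases "j = n")
          case True then show ?thesis using b0 by auto
        next
          case False
          then have "Suc n \<le> j \<and> j < d" using j by auto
          then show ?thesis using hb False by auto
        qed
      qed
      show ?thesis using \<open>Q n\<close> wf 1 2 W unfolding Q_def by blast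
    qed
    have "CS z d J (h(n := f)) \<in> Vs p W z" if "f \<in> G p z (\<omega> n)" for f
      using that
    proof (induction rule: Gs.induct)
      case Gzero
      have "CSf z d J (h(n := (\<lambda>_. 0))) = (\<lambda>_. 0)" by (rule ext) (simp add: CSf_upd[OF \<open>n < d\<close>])
      then have "CS z d J (h(n := (\<lambda>_. 0))) = 0" by (simp add: CS_def)
      then show ?case by (simp only: Vs_0)
    next
      case (Gpoly e)
      show ?case using useQ[of "Pol e"] by (simp only: ev.simps okb.simps)
    next
      case (Gfrac i a)
      show ?case
      proof (cases "a = 0")
        case True
        have "fr i a = ev (Pol 0)" using True by (simp add: fr_def fun_eq_iff)
        then show ?thesis using useQ[of "Pol 0"] by (simp only: okb.simps)
      next
        case False
        have ok: "okb (Fr i a) (\<omega> n)" using False Gfrac by simp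
        show ?thesis using useQ[OF ok] by (simp only: ev.simps)
      qed
    next
      case (Gadd f g)
      have "CS z d J (h(n := \<lambda>K. f K + g K)) = CS z d J (h(n := f)) + CS z d J (h(n := g))"
        unfolding CS_def
        by (subst infsum_add[symmetric]) (auto intro!: sm Gadd.hyps infsum_cong simp: CSf_upd[OF \<open>n < d\<close>] algebra_simps)
      then show ?case using Vs_add[OF Gadd.IH] by (simp only:)
    next
      case (Gsmult r f)
      have "CS z d J (h(n := \<lambda>K. r * f K)) = r * CS z d J (h(n := f))"
        unfolding CS_def
        by (subst infsum_cmult_right'[symmetric]) (auto intro!: infsum_cong simp: CSf_upd[OF \<open>n < d\<close>] algebra_simps)
      then show ?case using Vs_smult[OF Gsmult.IH Gsmult.hyps(1)] by (simp only:)
    next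
      case (Gcong f g)
      have "CS z d J (h(n := g)) = CS z d J (h(n := f))"
        unfolding CS_def
      proof (rule infsum_cong)
        fix k assume "k \<in> chain_idx d"
        then have "k n \<ge> 1" using \<open>n < d\<close> by (auto simp: chain_idx_def)
        then show "CSf z d J (h(n := g)) k = CSf z d J (h(n := f)) k"
          using Gcong.hyps(2) by (simp add: CSf_upd[OF \<open>n < d\<close>])
      qed
      then show ?case using Gcong.IH by (simp only:)
    qed
    then have "CS z d J (h(n := h n)) \<in> Vs p W z" using hG \<open>n < d\<close> by blast
    then show "CS z d J h \<in> Vs p W z" by simp
  qed
  have "Q n" if "n \<le> d" for n
    using that
  proof (induction n)
    case 0 show ?case by (rule Q0)
  next
    case (Suc n) then show ?case using Qs by simp
  qed
  then have Qd: "Q d" by simp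
  show ?thesis unfolding GEN_def
  proof (intro allI impI)
    fix J h \<omega> assume a: "wfJ p d J" "\<forall>j<d. h j \<in> G p z (\<omega> j)" "(\<Sum>j<d. int (\<omega> j)) \<le> W"
    have v: "\<forall>j. d \<le> j \<and> j < d \<longrightarrow> (\<exists>b. okb b (\<omega> j) \<and> h j = ev b)" by auto
    show "CS z d J h \<in> Vs p W z" using Qd a v unfolding Q_def by blast
  qed
qed

lemma GEN_all:
  assumes zn: "\<forall>j<p. norm (z j) > 1"
  shows "GEN p W z d"
proof (induction d rule: less_induct)
  case (less d)
  show ?case
    by (rule gen_from_basis[OF zn]) (rule basis_case[OF zn less.IH])
qed

theorem mainTheorem2:
  fixes p :: nat and A n :: "nat \<Rightarrow> nat" and c :: "(nat \<Rightarrow> nat) \<Rightarrow> rat"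
    and z :: "nat \<Rightarrow> complex"
  assumes "p \<ge> 1"
    and "\<forall>j<p. A j \<ge> 1"
    and "finite {e. c e \<noteq> 0}"
    and "\<forall>j<p. norm (z j) > 1"
  shows "\<exists>(N::nat) (q :: nat \<Rightarrow> nat) (s :: nat \<Rightarrow> nat \<Rightarrow> int) (J :: nat \<Rightarrow> nat \<Rightarrow> nat set)
            (a :: nat \<Rightarrow> complex).
           (\<forall>t<N. q t \<le> p
                \<and> (\<forall>i<q t. s t i \<ge> 1)
                \<and> (\<Sum>i<q t. s t i) \<le> (\<Sum>j<p. int (A j))
                \<and> (\<forall>i<q t. J t i \<subseteq> {..<p} \<and> J t i \<noteq> {})
                \<and> a t \<in> coeff_alg p z)
         \<and> (\<Sum>\<^sub>\<infinity>k\<in>chain_idx p.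
               poly_eval p c (\<lambda>j. of_nat (k j))
               / (\<Prod>j<p. pochhammer (of_nat (k j)) (n j + 1) ^ A j)
               * (\<Prod>j<p. z j powi (- int (k j))))
           = (\<Sum>t<N. a t * La (q t) (s t) (\<lambda>i. 1 / (\<Prod>j\<in>J t i. z j)))"
proof -
  define W where "W = (\<Sum>j<p. int (A j))"
  define E where "E = {e. c e \<noteq> 0}"
  define J0 where "J0 = (\<lambda>j::nat. {j})"
  define hh where "hh e j K = (of_nat K ^ e j / pochhammer (of_nat K) (Suc (n j)) ^ A j :: complex)" for e j K
  have zn: "\<forall>j<p. norm (z j) > 1" using assms(4) .
  have wf0: "wfJ p p J0" unfolding wfJ_def J0_def by auto
  have hhG: "\<forall>j<p. hh e j \<in> G p z (A j)" for e
    using assms(2) unfolding hh_def by (auto intro!: poch_G)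
  have sm: "CSf z p J0 (hh e) summable_on chain_idx p" for e
    by (rule CS_summable_Gw[OF wf0 zn hhG])
  have CSV: "CS z p J0 (hh e) \<in> Vs p W z" for e
    using GEN_all[OF zn, of W p] wf0 hhG unfolding GEN_def W_def by blast
  have pt: "poly_eval p c (\<lambda>j. of_nat (k j))
               / (\<Prod>j<p. pochhammer (of_nat (k j)) (n j + 1) ^ A j)
               * (\<Prod>j<p. z j powi (- int (k j)))
        = (\<Sum>e\<in>E. of_rat (c e) * CSf z p J0 (hh e) k)" for k
  proof -
    have fac: "(\<Prod>j<p. (of_nat (k j) :: complex) ^ e j) / (\<Prod>j<p. pochhammer (of_nat (k j)) (n j + 1) ^ A j)
               * (\<Prod>j<p. z j powi (- int (k j))) = CSf z p J0 (hh e) k" for e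
      unfolding CSf_def J0_def hh_def uJ_def
      by (simp add: prod.distrib prod_inversef[unfolded o_def] power_inverse power_int_minus power_one_over
               power_int_of_nat divide_inverse mult_ac)
    show ?thesis
      unfolding poly_eval_def E_def[symmetric]
      by (simp add: sum_divide_distrib sum_distrib_right fac[symmetric] mult.assoc)
  qed
  have "(\<Sum>\<^sub>\<infinity>k\<in>chain_idx p.
               poly_eval p c (\<lambda>j. of_nat (k j))
               / (\<Prod>j<p. pochhammer (of_nat (k j)) (n j + 1) ^ A j)
               * (\<Prod>j<p. z j powi (- int (k j))))
      = (\<Sum>\<^sub>\<infinity>k\<in>chain_idx p. \<Sum>e\<in>E. of_rat (c e) * CSf z p J0 (hh e) k)"
    by (simp only: pt)
  also have "\<dots> = (\<Sum>e\<in>E. of_rat (c e) * CS z p J0 (hh e))"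
    unfolding CS_def
    by (subst infsum_sum') (auto intro: summable_on_cmult_right sm simp: infsum_cmult_right')
  also have "\<dots> \<in> Vs p W z"
    by (intro Vs_sum Vs_smult CSV coeff_alg.rat)
  finally show ?thesis unfolding Vs_def W_def mem_Collect_eq .
qed

end
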